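(* There is an absolute constant $c>0$ such that for every instance $I$ of continuous BGT with $n\ge2$ and growth rates normalized so that $\sum_i h_i=1$, the schedule produced by Algorithm 3 satisfies $\mathrm{MH}\le c\cdot\log_2 n\cdot\mathrm{OPT}(I)$. Algorithm 3: let $s=\lceil 2\log_2 n\rceil$, $V_0=\{v_j: h_j\le n^{-2}\}$, enumerated as $v'_0,\dots,v'_{\ell-1}$, and for $i=1,\dots,s$, $V_i=\{v_j: 2^{i-1}n^{-2}<h_j\le 2^i n^{-2}\}$. For each nonempty $V_i$ ($i\ge1$) compute a minimum spanning tree $T_i$ of $V_i$ and a directed closed Euler tour $C_i$ of $T_i$ (a cyclic walk traversing each edge twice), marking an arbitrary point of $C_i$ as its "last visited point". Set $j=0$. The robot starts at $v_1$ and repeats forever: (a) for $i=1,\dots,s$ with $V_i\ne\emptyset$: travel directly to the last visited point of $C_i$; then, if $|V_i|\ge2$, walk along $C_i$ in the tour direction, stopping at the first tour vertex at which the distance covered along $C_i$ in this phase is at least $D$, and make it the new last visited point of $C_i$; (b) if $V_0\ne\emptyset$, travel directly to $v'_j$ and set $j\leftarrow (j+1)\bmod \ell$. Bamboos are cut whenever the robot is at their point.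
   Context: Continuous BGT: bamboos at points $V=\{v_1,\dots,v_n\}$, growth rates $h_1\ge\dots\ge h_n>0$, initial heights $0$; symmetric travel times $t_{i,j}>0$ ($i\ne j$) satisfying the triangle inequality. The robot starts at $v_1$ at time $0$, moving from $v_i$ to $v_j$ takes time $t_{i,j}$, and the bamboo at a point is cut instantaneously to $0$ whenever the robot is there. Height of $b_i$ at time $t$ = $h_i$ times time since its last cut (or since $0$). $\mathrm{MH}$ = supremum of all heights over all times; $\mathrm{OPT}(I)$ = infimum of $\mathrm{MH}$ over all robot walks. $D=\max_{i,j}t_{i,j}$. *)

theory Defs
  imports Complex_Main "HOL-Library.Multiset" "HOL-Library.Stream" "HOL-Library.Extended_Real"
begin

(* Points v_1..v_n are encoded as 0..n-1 (v_1 = 0).  h i = growth rate of the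
   bamboo at point i, t i j = travel time between i and j (only used for i ~= j). *)

definition bgt_instance :: "nat \<Rightarrow> (nat \<Rightarrow> real) \<Rightarrow> (nat \<Rightarrow> nat \<Rightarrow> real) \<Rightarrow> bool" where
  "bgt_instance n h t \<longleftrightarrow>
     (\<forall>i j. i \<le> j \<longrightarrow> j < n \<longrightarrow> h j \<le> h i) \<and>
     (\<forall>i<n. 0 < h i) \<and>
     (\<forall>i<n. \<forall>j<n. i \<noteq> j \<longrightarrow> 0 < t i j \<and> t i j = t j i) \<and>
     (\<forall>i<n. \<forall>j<n. \<forall>k<n. i \<noteq> j \<and> j \<noteq> k \<and> i \<noteq> k \<longrightarrow> t i k \<le> t i j + t j k)"

definition tt :: "(nat \<Rightarrow> nat \<Rightarrow> real) \<Rightarrow> nat \<Rightarrow> nat \<Rightarrow> real" where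
  "tt t i j = (if i = j then 0 else t i j)"

definition Dmax :: "nat \<Rightarrow> (nat \<Rightarrow> nat \<Rightarrow> real) \<Rightarrow> real" where
  "Dmax n t = Max {t i j | i j. i < n \<and> j < n \<and> i \<noteq> j}"

definition robot_walks :: "nat \<Rightarrow> (nat \<Rightarrow> nat) set" where
  "robot_walks n = {w. w 0 = 0 \<and> (\<forall>k. w k < n)}"

definition arrival :: "(nat \<Rightarrow> nat \<Rightarrow> real) \<Rightarrow> (nat \<Rightarrow> nat) \<Rightarrow> nat \<Rightarrow> real" where
  "arrival t w k = (\<Sum>m<k. tt t (w m) (w (Suc m)))"

definition last_cut :: "(nat \<Rightarrow> nat \<Rightarrow> real) \<Rightarrow> (nat \<Rightarrow> nat) \<Rightarrow> nat \<Rightarrow> real \<Rightarrow> real" where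
  "last_cut t w i \<tau> = Sup ({0} \<union> {arrival t w k | k. w k = i \<and> arrival t w k \<le> \<tau>})"

definition height :: "(nat \<Rightarrow> real) \<Rightarrow> (nat \<Rightarrow> nat \<Rightarrow> real) \<Rightarrow> (nat \<Rightarrow> nat) \<Rightarrow> nat \<Rightarrow> real \<Rightarrow> real" where
  "height h t w i \<tau> = h i * (\<tau> - last_cut t w i \<tau>)"

definition MH :: "nat \<Rightarrow> (nat \<Rightarrow> real) \<Rightarrow> (nat \<Rightarrow> nat \<Rightarrow> real) \<Rightarrow> (nat \<Rightarrow> nat) \<Rightarrow> ereal" where
  "MH n h t w = (SUP p \<in> {..<n} \<times> {0::real..}. ereal (height h t w (fst p) (snd p)))"

definition OPT :: "nat \<Rightarrow> (nat \<Rightarrow> real) \<Rightarrow> (nat \<Rightarrow> nat \<Rightarrow> real) \<Rightarrow> ereal" where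
  "OPT n h t = (INF w \<in> robot_walks n. MH n h t w)"

definition alg_s :: "nat \<Rightarrow> nat" where
  "alg_s n = nat \<lceil>2 * log 2 (real n)\<rceil>"

definition cls0 :: "nat \<Rightarrow> (nat \<Rightarrow> real) \<Rightarrow> nat set" where
  "cls0 n h = {j. j < n \<and> h j \<le> 1 / (real n)^2}"

definition cls :: "nat \<Rightarrow> (nat \<Rightarrow> real) \<Rightarrow> nat \<Rightarrow> nat set" where
  "cls n h i = {j. j < n \<and> 2^(i-1) / (real n)^2 < h j \<and> h j \<le> 2^i / (real n)^2}"

definition spanning_tree :: "nat set \<Rightarrow> (nat \<times> nat) set \<Rightarrow> bool" where
  "spanning_tree V E \<longleftrightarrow>
     E \<subseteq> {(a,b). a \<in> V \<and> b \<in> V \<and> a < b} \<and> card E + 1 = card V \<and>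
     (\<forall>a\<in>V. \<forall>b\<in>V. (a,b) \<in> (E \<union> E\<inverse>)\<^sup>*)"

definition tree_weight :: "(nat \<Rightarrow> nat \<Rightarrow> real) \<Rightarrow> (nat \<times> nat) set \<Rightarrow> real" where
  "tree_weight t E = (\<Sum>(a,b)\<in>E. t a b)"

definition min_spanning_tree :: "(nat \<Rightarrow> nat \<Rightarrow> real) \<Rightarrow> nat set \<Rightarrow> (nat \<times> nat) set \<Rightarrow> bool" where
  "min_spanning_tree t V E \<longleftrightarrow> spanning_tree V E \<and>
     (\<forall>E'. spanning_tree V E' \<longrightarrow> tree_weight t E \<le> tree_weight t E')"

(* closed directed Euler tour of the doubled tree, as a cyclic list of points *)
definition euler_tour :: "nat set \<Rightarrow> (nat \<times> nat) set \<Rightarrow> nat list \<Rightarrow> bool" where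
  "euler_tour V E cs \<longleftrightarrow>
     (if card V = 1 then cs = [the_elem V]
      else cs \<noteq> [] \<and>
        mset (map (\<lambda>k. (cs ! k, cs ! ((k + 1) mod length cs))) [0..<length cs])
          = mset_set (E \<union> E\<inverse>))"

definition tour_len :: "(nat \<Rightarrow> nat \<Rightarrow> real) \<Rightarrow> nat list \<Rightarrow> nat \<Rightarrow> nat \<Rightarrow> real" where
  "tour_len t cs p r =
     (\<Sum>q<r. tt t (cs ! ((p + q) mod length cs)) (cs ! ((p + q + 1) mod length cs)))"

definition tour_steps :: "(nat \<Rightarrow> nat \<Rightarrow> real) \<Rightarrow> real \<Rightarrow> nat list \<Rightarrow> nat \<Rightarrow> nat" where
  "tour_steps t D cs p = (LEAST r. D \<le> tour_len t cs p r)"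

(* phase for one class V with tour cs and last visited position p:
   visited points and new last visited position *)
definition class_step ::
  "(nat \<Rightarrow> nat \<Rightarrow> real) \<Rightarrow> real \<Rightarrow> nat set \<Rightarrow> nat list \<Rightarrow> nat \<Rightarrow> nat list \<times> nat" where
  "class_step t D V cs p =
     (if V = {} then ([], p)
      else if 2 \<le> card V then
        (let r = tour_steps t D cs p
         in (map (\<lambda>q. cs ! ((p + q) mod length cs)) [0..<r + 1], (p + r) mod length cs))
      else ([cs ! p], p))"

(* one iteration of the infinite loop; state = (last visited positions, j) *)
definition alg_round ::
  "nat \<Rightarrow> (nat \<Rightarrow> real) \<Rightarrow> (nat \<Rightarrow> nat \<Rightarrow> real) \<Rightarrow> (nat \<Rightarrow> nat list) \<Rightarrow> (nat \<Rightarrow> nat)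
   \<Rightarrow> (nat \<Rightarrow> nat) \<times> nat \<Rightarrow> nat list \<times> ((nat \<Rightarrow> nat) \<times> nat)" where
  "alg_round n h t C e st =
     (let P = fst st; j = snd st; s = alg_s n; D = Dmax n t; V0 = cls0 n h;
          step = (\<lambda>i. class_step t D (cls n h i) (C i) (P i))
      in (concat (map (\<lambda>i. fst (step i)) [1..<s + 1])
            @ (if V0 = {} then [] else [e j]),
          (\<lambda>i. if 1 \<le> i \<and> i \<le> s then snd (step i) else P i,
           if V0 = {} then j else (j + 1) mod card V0)))"

definition alg_walk ::
  "nat \<Rightarrow> (nat \<Rightarrow> real) \<Rightarrow> (nat \<Rightarrow> nat \<Rightarrow> real) \<Rightarrow> (nat \<Rightarrow> nat list) \<Rightarrow> (nat \<Rightarrow> nat)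
   \<Rightarrow> (nat \<Rightarrow> nat) \<Rightarrow> nat \<Rightarrow> nat" where
  "alg_walk n h t C p0 e k =
     (0 ## flat (smap (\<lambda>st. fst (alg_round n h t C e st))
                      (siterate (\<lambda>st. snd (alg_round n h t C e st)) (p0, 0)))) !! k"

end

theory Submission
  imports Defs
begin


lemma bgt_pos: "bgt_instance n h t \<Longrightarrow> i < n \<Longrightarrow> 0 < h i"
  by (simp add: bgt_instance_def)
lemma bgt_mono: "bgt_instance n h t \<Longrightarrow> i \<le> j \<Longrightarrow> j < n \<Longrightarrow> h j \<le> h i"
  by (simp add: bgt_instance_def)

lemma tt_nonneg: "bgt_instance n h t \<Longrightarrow> a < n \<Longrightarrow> b < n \<Longrightarrow> 0 \<le> tt t a b"
  unfolding bgt_instance_def tt_def by (cases "a = b") (auto simp: less_imp_le)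

lemma tt_pos: "bgt_instance n h t \<Longrightarrow> a < n \<Longrightarrow> b < n \<Longrightarrow> a \<noteq> b \<Longrightarrow> 0 < tt t a b"
  unfolding bgt_instance_def tt_def by auto

lemma tt_sym: "bgt_instance n h t \<Longrightarrow> a < n \<Longrightarrow> b < n \<Longrightarrow> tt t a b = tt t b a"
  unfolding bgt_instance_def tt_def by auto

lemma tt_tri: "bgt_instance n h t \<Longrightarrow> a < n \<Longrightarrow> b < n \<Longrightarrow> c < n \<Longrightarrow>
   tt t a c \<le> tt t a b + tt t b c"
proof -
  assume B: "bgt_instance n h t" and abc: "a < n" "b < n" "c < n"
  show ?thesis
  proof (cases "a = c")
    case True thus ?thesis using tt_nonneg[OF B] abc by (simp add: tt_def add_nonneg_nonneg)
  next
    case False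
    show ?thesis
    proof (cases "b = a \<or> b = c")
      case True thus ?thesis using tt_nonneg[OF B] abc by (auto simp: tt_def)
    next
      case False
      with \<open>a \<noteq> c\<close> B abc show ?thesis unfolding bgt_instance_def tt_def by auto
    qed
  qed
qed

lemma Dset_finite: "finite {(t::nat\<Rightarrow>nat\<Rightarrow>real) i j | i j. i < (n::nat) \<and> j < n \<and> i \<noteq> j}"
proof -
  have "{t i j | i j. i < n \<and> j < n \<and> i \<noteq> j} \<subseteq> (\<lambda>(i,j). t i j) ` ({..<n} \<times> {..<n})"
    by auto
  moreover have "finite ((\<lambda>(i,j). t i j) ` ({..<n} \<times> {..<n}))"
    by (intro finite_imageI finite_cartesian_product finite_lessThan)
  ultimately show ?thesis by (rule finite_subset)
qed

lemma tt_le_D: "a < n \<Longrightarrow> b < n \<Longrightarrow> a \<noteq> b \<Longrightarrow> tt t a b \<le> Dmax n t"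
  unfolding Dmax_def tt_def by (auto intro!: Max_ge Dset_finite)

lemma D_attained: "2 \<le> n \<Longrightarrow> \<exists>a b. a < n \<and> b < n \<and> a \<noteq> b \<and> Dmax n t = t a b"
proof -
  assume "2 \<le> n"
  hence "t 0 1 \<in> {t i j | i j. i < n \<and> j < n \<and> i \<noteq> j}" by force
  hence "Dmax n t \<in> {t i j | i j. i < n \<and> j < n \<and> i \<noteq> j}"
    unfolding Dmax_def by (intro Max_in Dset_finite) auto
  thus ?thesis by auto
qed

lemma D_pos: "2 \<le> n \<Longrightarrow> bgt_instance n h t \<Longrightarrow> 0 < Dmax n t"
  using D_attained[of n t] unfolding bgt_instance_def by force

lemma tt_le_D': "2 \<le> n \<Longrightarrow> bgt_instance n h t \<Longrightarrow> a < n \<Longrightarrow> b < n \<Longrightarrow> tt t a b \<le> Dmax n t"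
  using tt_le_D[of a n b t] D_pos[of n h t] by (cases "a = b") (auto simp: tt_def)

lemma arrival_0[simp]: "arrival t w 0 = 0" by (simp add: arrival_def)
lemma arrival_Suc: "arrival t w (Suc k) = arrival t w k + tt t (w k) (w (Suc k))"
  by (simp add: arrival_def)

lemma arrival_seg:
  assumes B: "bgt_instance n h t" and W: "\<forall>k. w k < n" and ab: "a \<le> b"
  shows "tt t (w a) (w b) \<le> arrival t w b - arrival t w a"
  using ab
proof (induction b)
  case 0 thus ?case by (simp add: tt_def)
next
  case (Suc b)
  show ?case
  proof (cases "a = Suc b")
    case True thus ?thesis by (simp add: tt_def)
  next
    case False
    hence "a \<le> b" using Suc.prems by simp
    hence "tt t (w a) (w b) \<le> arrival t w b - arrival t w a" using Suc.IH by simp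
    moreover have "tt t (w a) (w (Suc b)) \<le> tt t (w a) (w b) + tt t (w b) (w (Suc b))"
      using tt_tri[OF B] W by blast
    ultimately show ?thesis by (simp add: arrival_Suc)
  qed
qed

lemma arrival_mono:
  assumes B: "bgt_instance n h t" and W: "\<forall>k. w k < n" and ab: "a \<le> b"
  shows "arrival t w a \<le> arrival t w b"
  using arrival_seg[OF assms] tt_nonneg[OF B] W by (meson diff_ge_0_iff_ge order_trans)

lemma lc_bdd: "bdd_above ({0} \<union> {arrival t w k | k. w k = i \<and> arrival t w k \<le> \<tau>})"
  by (rule bdd_aboveI[where M = "max 0 \<tau>"]) auto

lemma lc_ge0: "0 \<le> last_cut t w i \<tau>"
  unfolding last_cut_def by (rule cSup_upper[OF _ lc_bdd]) auto

lemma lc_ge: "w k = i \<Longrightarrow> arrival t w k \<le> \<tau> \<Longrightarrow> arrival t w k \<le> last_cut t w i \<tau>"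
  unfolding last_cut_def by (rule cSup_upper[OF _ lc_bdd]) auto

lemma lc_le: "0 \<le> b \<Longrightarrow> (\<And>k. w k = i \<Longrightarrow> arrival t w k \<le> \<tau> \<Longrightarrow> arrival t w k \<le> b)
   \<Longrightarrow> last_cut t w i \<tau> \<le> b"
  unfolding last_cut_def by (rule cSup_least) auto

lemma lc_none: "\<not>(\<exists>k. w k = i \<and> arrival t w k \<le> \<tau>) \<Longrightarrow> last_cut t w i \<tau> = 0"
proof -
  assume "\<not>(\<exists>k. w k = i \<and> arrival t w k \<le> \<tau>)"
  hence "{arrival t w k | k. w k = i \<and> arrival t w k \<le> \<tau>} = {}" by auto
  thus ?thesis unfolding last_cut_def by (metis Un_empty_right cSup_singleton)
qed

lemma height_le_MH: "MH n h t w \<le> ereal M \<Longrightarrow> i < n \<Longrightarrow> 0 \<le> \<tau> \<Longrightarrow> height h t w i \<tau> \<le> M"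
proof -
  assume a: "MH n h t w \<le> ereal M" "i < n" "0 \<le> \<tau>"
  have "ereal (height h t w i \<tau>) \<le> MH n h t w"
    unfolding MH_def by (rule SUP_upper2[of "(i,\<tau>)"]) (use a in auto)
  with a show ?thesis by (metis ereal_less_eq(3) order_trans)
qed

lemma MH_le: "(\<And>i \<tau>. i < n \<Longrightarrow> 0 \<le> \<tau> \<Longrightarrow> height h t w i \<tau> \<le> B) \<Longrightarrow> MH n h t w \<le> ereal B"
  unfolding MH_def by (rule SUP_least) auto

lemma MH_ge0: "0 < n \<Longrightarrow> 0 \<le> MH n h t w"
proof -
  assume "0 < n"
  have "ereal (height h t w 0 0) \<le> MH n h t w"
    unfolding MH_def by (rule SUP_upper2[of "(0,0)"]) (use \<open>0 < n\<close> in auto)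
  moreover have "last_cut t w 0 0 = 0"
    using lc_ge0[of t w 0 0] lc_le[of 0 w 0 t 0] by force
  ultimately show ?thesis by (simp add: height_def zero_ereal_def)
qed

lemma visit_exists:
  assumes "MH n h t w \<le> ereal M" "i < n" "0 < h i" "M / h i < \<tau>"
  shows "\<exists>k. w k = i \<and> arrival t w k \<le> \<tau>"
proof (rule ccontr)
  assume "\<not> ?thesis"
  hence "last_cut t w i \<tau> = 0" by (rule lc_none)
  moreover have "0 \<le> \<tau>"
  proof -
    have "0 \<le> MH n h t w" using MH_ge0 assms(2) by simp
    hence "0 \<le> M" using assms(1) by (metis ereal_less_eq(5) order_trans)
    hence "0 \<le> M / h i" using assms(3) by simp
    thus ?thesis using assms(4) by simp
  qed
  ultimately have "h i * \<tau> \<le> M" using height_le_MH[OF assms(1,2), of \<tau>] by (simp add: height_def)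
  moreover have "M < h i * \<tau>" using assms(3,4) by (simp add: divide_less_eq mult.commute)
  ultimately show False by simp
qed

lemma height_from_visits:
  assumes "0 \<le> h i" "0 \<le> \<tau>"
    and "\<tau> \<le> G \<or> (\<exists>k. w k = i \<and> \<tau> - G \<le> arrival t w k \<and> arrival t w k \<le> \<tau>)"
  shows "height h t w i \<tau> \<le> h i * G"
proof -
  have "\<tau> - last_cut t w i \<tau> \<le> G"
    using assms(3) lc_ge0[of t w i \<tau>] lc_ge[of w _ i t \<tau>] by force
  thus ?thesis unfolding height_def using assms(1) by (simp add: mult_left_mono)
qed




lemma spt_single: "spanning_tree {x} {}"
  unfolding spanning_tree_def by auto

lemma spt_finE: "spanning_tree S E \<Longrightarrow> finite S \<Longrightarrow> finite E"
  unfolding spanning_tree_def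
  by (rule finite_subset[of _ "S \<times> S"]) auto

lemma spt_insert:
  assumes sp: "spanning_tree S E" and fin: "finite S" and x: "x \<notin> S" and y: "y \<in> S"
  shows "spanning_tree (insert x S) (insert (min x y, max x y) E)"
proof -
  let ?e = "(min x y, max x y)"
  let ?E = "insert ?e E"
  have sub: "E \<subseteq> {(a,b). a \<in> S \<and> b \<in> S \<and> a < b}" and cardE: "card E + 1 = card S"
    and con: "\<forall>a\<in>S. \<forall>b\<in>S. (a,b) \<in> (E \<union> E\<inverse>)\<^sup>*" using sp unfolding spanning_tree_def by auto
  have xy: "x \<noteq> y" using x y by auto
  have finE: "finite E" using spt_finE[OF sp fin] .
  have eE: "?e \<notin> E" using sub x xy by (auto simp: min_def max_def)
  have 1: "?E \<subseteq> {(a,b). a \<in> insert x S \<and> b \<in> insert x S \<and> a < b}"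
    using sub xy y by (auto simp: min_def max_def)
  have 2: "card ?E + 1 = card (insert x S)"
    using cardE finE eE fin x by simp
  have mono: "(E \<union> E\<inverse>)\<^sup>* \<subseteq> (?E \<union> ?E\<inverse>)\<^sup>*" by (rule rtrancl_mono) auto
  have xy1: "(x,y) \<in> (?E \<union> ?E\<inverse>)\<^sup>*" by (rule r_into_rtrancl) (auto simp: min_def max_def)
  have yx1: "(y,x) \<in> (?E \<union> ?E\<inverse>)\<^sup>*" by (rule r_into_rtrancl) (auto simp: min_def max_def)
  have 3: "\<forall>a\<in>insert x S. \<forall>b\<in>insert x S. (a,b) \<in> (?E \<union> ?E\<inverse>)\<^sup>*"
  proof (intro ballI)
    fix a b assume a: "a \<in> insert x S" and b: "b \<in> insert x S"
    have Sc: "\<And>a b. a \<in> S \<Longrightarrow> b \<in> S \<Longrightarrow> (a,b) \<in> (?E \<union> ?E\<inverse>)\<^sup>*" using con mono by blast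
    show "(a,b) \<in> (?E \<union> ?E\<inverse>)\<^sup>*"
    proof (cases "a = x")
      case True
      show ?thesis
      proof (cases "b = x")
        case True thus ?thesis using \<open>a = x\<close> by simp
      next
        case False
        hence "b \<in> S" using b by simp
        thus ?thesis using True xy1 Sc[OF y] by (meson rtrancl_trans)
      qed
    next
      case False
      hence aS: "a \<in> S" using a by simp
      show ?thesis
      proof (cases "b = x")
        case True thus ?thesis using yx1 Sc[OF aS y] by (meson rtrancl_trans)
      next
        case False thus ?thesis using b Sc[OF aS] by simp
      qed
    qed
  qed
  show ?thesis unfolding spanning_tree_def using 1 2 3 by blast
qed

lemma tw_insert: "finite E \<Longrightarrow> e \<notin> E \<Longrightarrow> tree_weight t (insert e E) = t (fst e) (snd e) + tree_weight t E"
  unfolding tree_weight_def by (simp add: case_prod_beta)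

lemma tw_empty[simp]: "tree_weight t {} = 0" by (simp add: tree_weight_def)

lemma arrival_nonneg: "bgt_instance n h t \<Longrightarrow> \<forall>k. w k < n \<Longrightarrow> 0 \<le> arrival t w K"
  using arrival_mono[of n h t w 0 K] by simp

lemma spt_walk:
  assumes B: "bgt_instance n h t" and W: "\<forall>k. w k < n" and finV: "finite V"
  shows "(\<exists>k\<le>K. w k \<in> V) \<Longrightarrow> \<exists>E k0. k0 \<le> K \<and> w k0 \<in> V \<and>
     spanning_tree ({w k | k. k \<le> K} \<inter> V) E \<and> tree_weight t E + tt t (w k0) (w K) \<le> arrival t w K"
proof (induction K)
  case 0
  hence "w 0 \<in> V" by simp
  moreover have "{w k | k. k \<le> (0::nat)} \<inter> V = {w 0}" using \<open>w 0 \<in> V\<close> by auto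
  ultimately show ?case using spt_single[of "w 0"] by (intro exI[of _ "{}"] exI[of _ 0]) (simp add: tt_def)
next
  case (Suc K)
  define x where "x = w (Suc K)"
  have setS: "{w k | k. k \<le> Suc K} = insert x {w k | k. k \<le> K}"
    unfolding x_def by (auto simp: le_Suc_eq)
  have fS: "finite ({w k | k. k \<le> K} \<inter> V)" using finV by simp
  have arrS: "arrival t w (Suc K) = arrival t w K + tt t (w K) x" unfolding x_def by (rule arrival_Suc)
  show ?case
  proof (cases "\<exists>k\<le>K. w k \<in> V")
    case False
    hence xV: "x \<in> V" using Suc.prems x_def by (auto simp: le_Suc_eq)
    have "{w k | k. k \<le> Suc K} \<inter> V = {x}" using False xV setS by auto
    moreover have "0 \<le> arrival t w (Suc K)" using arrival_nonneg[OF B W] .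
    ultimately show ?thesis using spt_single[of x] xV
      by (intro exI[of _ "{}"] exI[of _ "Suc K"]) (simp add: tt_def x_def)
  next
    case True
    then obtain E k0 where k0: "k0 \<le> K" "w k0 \<in> V" and sp: "spanning_tree ({w k | k. k \<le> K} \<inter> V) E"
      and wt: "tree_weight t E + tt t (w k0) (w K) \<le> arrival t w K" using Suc.IH by blast
    have tri: "tt t (w k0) x \<le> tt t (w k0) (w K) + tt t (w K) x" unfolding x_def using tt_tri[OF B] W by blast
    have nn: "0 \<le> tt t (w k0) (w K)" "0 \<le> tt t (w K) x" using tt_nonneg[OF B] W x_def by auto
    show ?thesis
    proof (cases "x \<in> V")
      case False
      hence "{w k | k. k \<le> Suc K} \<inter> V = {w k | k. k \<le> K} \<inter> V" using setS by auto
      thus ?thesis using sp k0 wt tri arrS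
        by (intro exI[of _ E] exI[of _ k0]) (simp add: x_def[symmetric])
    next
      case xV: True
      show ?thesis
      proof (cases "x \<in> {w k | k. k \<le> K}")
        case True
        hence "{w k | k. k \<le> Suc K} \<inter> V = {w k | k. k \<le> K} \<inter> V" using setS by auto
        thus ?thesis using sp xV wt arrS nn
          by (intro exI[of _ E] exI[of _ "Suc K"]) (simp add: x_def[symmetric] tt_def)
      next
        case False
        have eq: "{w k | k. k \<le> Suc K} \<inter> V = insert x ({w k | k. k \<le> K} \<inter> V)" using setS xV by auto
        have xn: "x \<notin> {w k | k. k \<le> K} \<inter> V" using False by auto
        have yS: "w k0 \<in> {w k | k. k \<le> K} \<inter> V" using k0 by auto
        have sp2: "spanning_tree ({w k | k. k \<le> Suc K} \<inter> V) (insert (min x (w k0), max x (w k0)) E)"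
          unfolding eq by (rule spt_insert[OF sp fS xn yS])
        have finE: "finite E" by (rule spt_finE[OF sp fS])
        have xne: "x \<noteq> w k0" using xn yS by auto
        have eE: "(min x (w k0), max x (w k0)) \<notin> E" using sp xn unfolding spanning_tree_def
          by (auto simp: min_def max_def)
        have tsym: "t (min x (w k0)) (max x (w k0)) = tt t (w k0) x"
          using B W xne unfolding bgt_instance_def tt_def x_def by (auto simp: min_def max_def)
        have "tree_weight t (insert (min x (w k0), max x (w k0)) E) = tt t (w k0) x + tree_weight t E"
          using tw_insert[OF finE eE] tsym by simp
        hence "tree_weight t (insert (min x (w k0), max x (w k0)) E) + tt t (w (Suc K)) (w (Suc K))
                \<le> arrival t w (Suc K)" using wt tri arrS by (simp add: tt_def)
        thus ?thesis using sp2 xV x_def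
          by (intro exI[of _ "insert (min x (w k0), max x (w k0)) E"] exI[of _ "Suc K"]) simp
      qed
    qed
  qed
qed

lemma M_nonneg: "0 < n \<Longrightarrow> MH n h t w \<le> ereal M \<Longrightarrow> 0 \<le> M"
  using MH_ge0[of n h t w] by (metis ereal_less_eq(5) order_trans)

lemma mst_lower:
  assumes B: "bgt_instance n h t" and W: "\<forall>k. w k < n" and MH: "MH n h t w \<le> ereal M"
    and Vn: "V \<subseteq> {..<n}" and Vne: "V \<noteq> {}" and hl: "\<forall>u\<in>V. l \<le> h u" and l: "0 < l"
    and mst: "min_spanning_tree t V T"
  shows "l * tree_weight t T \<le> M"
proof (rule field_le_epsilon)
  fix eps :: real assume eps: "0 < eps"
  have n0: "0 < n" using Vn Vne by auto
  have M0: "0 \<le> M" using M_nonneg[OF n0 MH] .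
  have finV: "finite V" using Vn finite_subset by blast
  define \<tau> where "\<tau> = M / l + eps / l"
  have "\<forall>u\<in>V. \<exists>k. w k = u \<and> arrival t w k \<le> \<tau>"
  proof
    fix u assume u: "u \<in> V"
    have hu: "0 < h u" using hl u l by force
    have lu: "l \<le> h u" using hl u by blast
    have "M / h u \<le> M / l" using divide_left_mono[OF lu M0] l hu by simp
    also have "\<dots> < \<tau>" using eps l unfolding \<tau>_def by simp
    finally show "\<exists>k. w k = u \<and> arrival t w k \<le> \<tau>" using visit_exists[OF MH _ hu] u Vn by blast
  qed
  then obtain kf where kf: "\<forall>u\<in>V. w (kf u) = u \<and> arrival t w (kf u) \<le> \<tau>" by metis
  define K where "K = Max (kf ` V)"
  have KV: "K \<in> kf ` V" unfolding K_def using finV Vne by (intro Max_in) auto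
  hence arrK: "arrival t w K \<le> \<tau>" using kf by auto
  have Vsub: "V \<subseteq> {w k | k. k \<le> K}"
  proof
    fix u assume "u \<in> V"
    hence "kf u \<le> K" "w (kf u) = u" unfolding K_def using finV kf by auto
    thus "u \<in> {w k | k. k \<le> K}" by (metis (mono_tags, lifting) mem_Collect_eq)
  qed
  hence SV: "{w k | k. k \<le> K} \<inter> V = V" by auto
  have "\<exists>k\<le>K. w k \<in> V" using KV kf K_def finV by auto
  then obtain E k0 where k0: "k0 \<le> K" "w k0 \<in> V" and sp: "spanning_tree V E"
    and wt: "tree_weight t E + tt t (w k0) (w K) \<le> arrival t w K"
    using spt_walk[OF B W finV, of K] SV by auto
  have "tree_weight t T \<le> tree_weight t E" using mst sp unfolding min_spanning_tree_def by blast
  also have "\<dots> \<le> \<tau>" using wt arrK tt_nonneg[OF B] W by (smt (verit))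
  finally have "l * tree_weight t T \<le> l * \<tau>" using l by simp
  also have "\<dots> = M + eps" unfolding \<tau>_def using l by (simp add: field_simps)
  finally show "l * tree_weight t T \<le> M + eps" .
qed

lemma D_lower1:
  assumes B: "bgt_instance n h t" and W: "\<forall>k. w k < n" and w0: "w 0 = 0"
    and MH: "MH n h t w \<le> ereal M" and x: "x < n"
  shows "h 0 * tt t 0 x \<le> M"
proof (cases "x = 0")
  case True
  have "0 \<le> M" using M_nonneg[OF _ MH] x by simp
  thus ?thesis using True by (simp add: tt_def)
next
  case False
  have n0: "0 < n" using x by simp
  have M0: "0 \<le> M" using M_nonneg[OF n0 MH] .
  have hx: "0 < h x" using bgt_pos[OF B x] .
  obtain kx where kx: "w kx = x" using visit_exists[OF MH x hx, of "M / h x + 1"] by auto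
  define \<tau> where "\<tau> = arrival t w kx"
  have seg0: "tt t 0 x \<le> \<tau>" using arrival_seg[OF B W, of 0 kx] w0 kx unfolding \<tau>_def by simp
  have "last_cut t w 0 \<tau> \<le> \<tau> - tt t 0 x"
  proof (rule lc_le)
    show "0 \<le> \<tau> - tt t 0 x" using seg0 by simp
  next
    fix k assume wk: "w k = 0" and ak: "arrival t w k \<le> \<tau>"
    show "arrival t w k \<le> \<tau> - tt t 0 x"
    proof (cases "k \<le> kx")
      case True
      thus ?thesis using arrival_seg[OF B W True] wk kx unfolding \<tau>_def by simp
    next
      case False
      hence "tt t x 0 \<le> arrival t w k - \<tau>" using arrival_seg[OF B W, of kx k] wk kx unfolding \<tau>_def by simp
      moreover have "0 < tt t x 0" using tt_pos[OF B x n0] False \<open>x \<noteq> 0\<close> by simp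
      ultimately show ?thesis using ak by simp
    qed
  qed
  moreover have "0 \<le> \<tau>" using seg0 tt_nonneg[OF B n0 x] by simp
  ultimately have "h 0 * tt t 0 x \<le> height h t w 0 \<tau>"
    unfolding height_def using bgt_pos[OF B n0] by (simp add: mult_left_mono)
  also have "\<dots> \<le> M" using height_le_MH[OF MH n0 \<open>0 \<le> \<tau>\<close>] .
  finally show ?thesis .
qed

lemma D_lower:
  assumes n2: "2 \<le> n" and B: "bgt_instance n h t" and W: "\<forall>k. w k < n" and w0: "w 0 = 0"
    and MH: "MH n h t w \<le> ereal M"
  shows "h 0 * Dmax n t \<le> 2 * M"
proof -
  obtain a b where ab: "a < n" "b < n" "a \<noteq> b" "Dmax n t = t a b" using D_attained[OF n2] by blast
  have n0: "0 < n" using n2 by simp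
  have "Dmax n t = tt t a b" using ab by (simp add: tt_def)
  also have "\<dots> \<le> tt t a 0 + tt t 0 b" using tt_tri[OF B ab(1) n0 ab(2)] .
  also have "\<dots> = tt t 0 a + tt t 0 b" using tt_sym[OF B ab(1) n0] by simp
  finally have "h 0 * Dmax n t \<le> h 0 * tt t 0 a + h 0 * tt t 0 b"
    using bgt_pos[OF B n0] by (simp add: mult_left_mono distrib_left[symmetric])
  thus ?thesis using D_lower1[OF B W w0 MH ab(1)] D_lower1[OF B W w0 MH ab(2)] by simp
qed




lemma h_le1: assumes B: "bgt_instance n h t" and s1: "(\<Sum>i<n. h i) = 1" and v: "v < n"
  shows "h v \<le> 1"
proof -
  have "h v \<le> (\<Sum>i<n. h i)"
    by (rule member_le_sum) (use v bgt_pos[OF B] in \<open>auto simp: less_imp_le\<close>)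
  thus ?thesis using s1 by simp
qed

lemma h0_ge: assumes B: "bgt_instance n h t" and s1: "(\<Sum>i<n. h i) = 1" and n0: "0 < n"
  shows "1 / real n \<le> h 0"
proof -
  have "(\<Sum>i<n. h i) \<le> (\<Sum>i<n. h 0)" by (rule sum_mono) (use bgt_mono[OF B] in auto)
  hence "1 \<le> real n * h 0" using s1 by simp
  thus ?thesis using n0 by (simp add: field_simps)
qed

lemma cover:
  assumes n2: "2 \<le> n" and B: "bgt_instance n h t" and s1: "(\<Sum>i<n. h i) = 1"
    and v: "v < n" and nv: "v \<notin> cls0 n h"
  shows "\<exists>i\<in>{1..alg_s n}. v \<in> cls n h i"
proof -
  have hv1: "h v \<le> 1" by (rule h_le1[OF B s1 v])
  have npos: "0 < real n" using n2 by simp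
  define x where "x = h v * (real n)^2"
  have x1: "1 < x" using nv v npos unfolding cls0_def x_def by (auto simp: field_simps)
  have xn: "x \<le> (real n)^2" unfolding x_def using hv1 npos by (simp add: mult_left_le_one_le)
  define lx where "lx = log 2 x"
  have lx0: "0 < lx" unfolding lx_def using x1 by simp
  define i where "i = nat \<lceil>lx\<rceil>"
  have ri: "real i = of_int \<lceil>lx\<rceil>" unfolding i_def using lx0 by simp
  have i1: "1 \<le> i" unfolding i_def using lx0 by linarith
  have "x \<le> 2 powr (real i)" using log_le_iff[of 2 x "real i"] x1 ri unfolding lx_def
    by simp
  hence up: "x \<le> 2 ^ i" by (simp add: powr_realpow)
  have "real (i - 1) < lx" using ri i1 by (simp add: of_nat_diff) linarith
  hence "2 powr (real (i - 1)) < x" using less_log_iff[of 2 x "real (i - 1)"] x1 unfolding lx_def by simp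
  hence low: "2 ^ (i - 1) < x" by (simp add: powr_realpow)
  have "lx \<le> log 2 ((real n)^2)" unfolding lx_def using xn x1 npos by (subst log_le_cancel_iff) auto
  also have "\<dots> = 2 * log 2 (real n)" by (simp add: log_nat_power)
  finally have "i \<le> alg_s n" unfolding i_def alg_s_def by (intro nat_mono ceiling_mono)
  moreover have "v \<in> cls n h i" unfolding cls_def using v up low npos
    by (simp add: x_def field_simps)
  ultimately show ?thesis using i1 by auto
qed




lemma mod2: "x < 2 * (len::nat) \<Longrightarrow> x mod len = (if x < len then x else x - len)"
  by (simp add: le_mod_geq)

lemma rot_inj: "0 < (len::nat) \<Longrightarrow> (p + q1) mod len = (p + q2) mod len \<Longrightarrow> q1 < len \<Longrightarrow> q2 < len \<Longrightarrow> q1 = q2"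
proof -
  assume a: "0 < len" "(p + q1) mod len = (p + q2) mod len" "q1 < len" "q2 < len"
  have "(p mod len + q1) mod len = (p mod len + q2) mod len" using a(2) by (simp add: mod_add_left_eq)
  moreover have "p mod len < len" using a(1) by simp
  ultimately show ?thesis using a(3,4) mod2[of "p mod len + q1" len] mod2[of "p mod len + q2" len]
    by (simp split: if_splits)
qed

lemma rot_inj_on: assumes l: "0 < (len::nat)" shows "inj_on (\<lambda>q. (p + q) mod len) {..<len}"
proof (rule inj_onI)
  fix x y assume "x \<in> {..<len}" "y \<in> {..<len}" "(p + x) mod len = (p + y) mod len"
  thus "x = y" using rot_inj[OF l, of p x y] by simp
qed

lemma rot_image: "0 < (len::nat) \<Longrightarrow> (\<lambda>q. (p + q) mod len) ` {..<len} = {..<len}"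
proof -
  assume l: "0 < len"
  have "(\<lambda>q. (p + q) mod len) ` {..<len} \<subseteq> {..<len}" using l by auto
  moreover have "card ((\<lambda>q. (p + q) mod len) ` {..<len}) = card {..<len}"
    using card_image[OF rot_inj_on[OF l]] by simp
  ultimately show ?thesis by (intro card_subset_eq) auto
qed

definition tF :: "(nat \<Rightarrow> nat \<Rightarrow> real) \<Rightarrow> nat list \<Rightarrow> nat \<Rightarrow> real" where
  "tF t cs k = tt t (cs ! k) (cs ! ((k + 1) mod length cs))"

lemma tour_len_eq: "tour_len t cs p r = (\<Sum>q<r. tF t cs ((p + q) mod length cs))"
  unfolding tour_len_def tF_def by (simp add: mod_Suc_eq)

lemma tour_len_mod: "tour_len t cs (p mod length cs) r = tour_len t cs p r"
  unfolding tour_len_eq by (simp add: mod_add_left_eq)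

lemma tour_len_add: "tour_len t cs p (a + b) = tour_len t cs p a + tour_len t cs ((p + a) mod length cs) b"
proof (induction b)
  case 0 thus ?case by (simp add: tour_len_eq)
next
  case (Suc b)
  have "((p + a) mod length cs + b) mod length cs = (p + (a + b)) mod length cs"
    by (simp add: mod_add_left_eq add.assoc)
  thus ?case using Suc.IH unfolding tour_len_eq by simp
qed

lemma tour_len_le_full:
  assumes l: "0 < length cs" and R: "R \<le> length cs" and nn: "\<forall>k<length cs. 0 \<le> tF t cs k"
  shows "tour_len t cs p R \<le> (\<Sum>k<length cs. tF t cs k)"
proof -
  have inj: "inj_on (\<lambda>q. (p + q) mod length cs) {..<R}"
    by (rule inj_on_subset[OF rot_inj_on[OF l]]) (use R in auto)
  have "tour_len t cs p R = (\<Sum>k\<in>(\<lambda>q. (p + q) mod length cs) ` {..<R}. tF t cs k)"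
    unfolding tour_len_eq by (simp add: sum.reindex[OF inj])
  also have "\<dots> \<le> (\<Sum>k<length cs. tF t cs k)"
    by (rule sum_mono2) (use l nn in auto)
  finally show ?thesis .
qed

lemma tour_len_full:
  assumes l: "0 < length cs"
  shows "tour_len t cs p (length cs) = (\<Sum>k<length cs. tF t cs k)"
proof -
  have "tour_len t cs p (length cs) = (\<Sum>k\<in>(\<lambda>q. (p + q) mod length cs) ` {..<length cs}. tF t cs k)"
    unfolding tour_len_eq by (simp add: sum.reindex[OF rot_inj_on[OF l]])
  thus ?thesis using rot_image[OF l] by simp
qed

lemma tour_len_mult:
  assumes l: "0 < length cs"
  shows "tour_len t cs p (m * length cs) = real m * (\<Sum>k<length cs. tF t cs k)"
proof (induction m)
  case 0 thus ?case by (simp add: tour_len_eq)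
next
  case (Suc m)
  have "tour_len t cs p (Suc m * length cs) = tour_len t cs p (m * length cs + length cs)" by (simp add: add.commute)
  also have "\<dots> = real m * (\<Sum>k<length cs. tF t cs k) + (\<Sum>k<length cs. tF t cs k)"
    unfolding tour_len_add Suc.IH tour_len_full[OF l] ..
  finally show ?case by (simp add: algebra_simps)
qed

lemma tour_len_exists:
  assumes l: "0 < length cs" and L: "0 < (\<Sum>k<length cs. tF t cs k)"
  shows "\<exists>r. D \<le> tour_len t cs p r"
proof -
  obtain m :: nat where "D / (\<Sum>k<length cs. tF t cs k) \<le> real m" using real_arch_simple by blast
  hence "D \<le> real m * (\<Sum>k<length cs. tF t cs k)" using L by (simp add: field_simps)
  thus ?thesis using tour_len_mult[OF l] by metis
qed

lemma tour_cover:
  fixes cs :: "nat list" and p r :: "nat \<Rightarrow> nat" and Vis :: "nat \<Rightarrow> nat set"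
  assumes cs: "cs \<noteq> []" and nn: "\<forall>k<length cs. 0 \<le> tF t cs k"
    and pS: "\<forall>k. p (Suc k) = (p k + r k) mod length cs"
    and rD: "\<forall>k. D \<le> tour_len t cs (p k) (r k)"
    and vis: "\<forall>k q. q \<le> r k \<longrightarrow> cs ! ((p k + q) mod length cs) \<in> Vis k"
    and KD: "(\<Sum>k<length cs. tF t cs k) < real K * D"
  shows "\<forall>x\<in>set cs. \<exists>j. k0 \<le> j \<and> j < k0 + K \<and> x \<in> Vis j"
proof -
  define len where "len = length cs"
  have l: "0 < len" using cs unfolding len_def by simp
  define S where "S m = (\<Sum>j<m. r (k0 + j))" for m
  have c1: "p (k0 + m) mod len = (p k0 + S m) mod len" for m
  proof (induction m)
    case 0 thus ?case by (simp add: S_def)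
  next
    case (Suc m)
    have "p (k0 + Suc m) mod len = (p (k0 + m) + r (k0 + m)) mod len" using pS unfolding len_def by simp
    also have "\<dots> = (p (k0 + m) mod len + r (k0 + m)) mod len" by (simp add: mod_add_left_eq)
    also have "\<dots> = ((p k0 + S m) mod len + r (k0 + m)) mod len" using Suc.IH by simp
    also have "\<dots> = (p k0 + S (Suc m)) mod len" by (simp add: S_def mod_add_left_eq add.assoc)
    finally show ?case .
  qed
  have c2: "real m * D \<le> tour_len t cs (p k0) (S m)" for m
  proof (induction m)
    case 0 thus ?case by (simp add: S_def tour_len_eq)
  next
    case (Suc m)
    have "tour_len t cs (p k0) (S (Suc m)) = tour_len t cs (p k0) (S m + r (k0 + m))" by (simp add: S_def)
    also have "\<dots> = tour_len t cs (p k0) (S m) + tour_len t cs ((p k0 + S m) mod len) (r (k0 + m))"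
      unfolding len_def by (rule tour_len_add)
    also have "(p k0 + S m) mod len = p (k0 + m) mod len" using c1 by simp
    also have "tour_len t cs (p (k0 + m) mod len) (r (k0 + m)) = tour_len t cs (p (k0 + m)) (r (k0 + m))"
      unfolding len_def by (rule tour_len_mod)
    finally have eq: "tour_len t cs (p k0) (S (Suc m)) = tour_len t cs (p k0) (S m) + tour_len t cs (p (k0 + m)) (r (k0 + m))" .
    have "D \<le> tour_len t cs (p (k0 + m)) (r (k0 + m))" using rD by blast
    moreover have "real (Suc m) * D = real m * D + D" by (simp add: algebra_simps)
    ultimately show ?case using Suc.IH eq by linarith
  qed
  have c3: "\<forall>q < S m. \<exists>j<m. cs ! ((p k0 + q) mod len) \<in> Vis (k0 + j)" for m
  proof (induction m)
    case 0 thus ?case by (simp add: S_def)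
  next
    case (Suc m)
    show ?case
    proof (intro allI impI)
      fix q assume q: "q < S (Suc m)"
      show "\<exists>j<Suc m. cs ! ((p k0 + q) mod len) \<in> Vis (k0 + j)"
      proof (cases "q < S m")
        case True
        then obtain j where "j < m" "cs ! ((p k0 + q) mod len) \<in> Vis (k0 + j)" using Suc.IH by blast
        thus ?thesis by (intro exI[of _ j]) simp
      next
        case False
        define q' where "q' = q - S m"
        have q': "q = S m + q'" using False unfolding q'_def by simp
        have "q' < r (k0 + m)" using q q' by (simp add: S_def)
        have "(p k0 + q) mod len = ((p k0 + S m) mod len + q') mod len"
          using q' by (simp add: mod_add_left_eq add.assoc)
        also have "\<dots> = (p (k0 + m) mod len + q') mod len" using c1 by simp
        also have "\<dots> = (p (k0 + m) + q') mod len" by (simp add: mod_add_left_eq)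
        finally have "cs ! ((p k0 + q) mod len) \<in> Vis (k0 + m)"
          using vis \<open>q' < r (k0 + m)\<close> unfolding len_def by simp
        thus ?thesis by blast
      qed
    qed
  qed
  have SK: "len \<le> S K"
  proof (rule ccontr)
    assume "\<not> len \<le> S K"
    hence "tour_len t cs (p k0) (S K) \<le> (\<Sum>k<length cs. tF t cs k)"
      using tour_len_le_full[OF _ _ nn] l unfolding len_def by simp
    thus False using c2[of K] KD by simp
  qed
  show ?thesis
  proof
    fix x assume "x \<in> set cs"
    then obtain i where i: "i < len" "x = cs ! i" unfolding len_def by (auto simp: in_set_conv_nth)
    have "i \<in> (\<lambda>q. (p k0 + q) mod len) ` {..<len}" using rot_image[OF l, of "p k0"] i by simp
    then obtain q where q: "q < len" "(p k0 + q) mod len = i" by auto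
    have "q < S K" using q SK by simp
    then obtain j where "j < K" "cs ! ((p k0 + q) mod len) \<in> Vis (k0 + j)" using c3[of K] by auto
    thus "\<exists>j. k0 \<le> j \<and> j < k0 + K \<and> x \<in> Vis j" using q i by (intro exI[of _ "k0 + j"]) auto
  qed
qed




fun walkf :: "(nat \<Rightarrow> nat \<Rightarrow> real) \<Rightarrow> nat \<Rightarrow> nat list \<Rightarrow> real" where
  "walkf t a [] = 0"
| "walkf t a (x # xs) = tt t a x + walkf t x xs"

lemma wf_append: "walkf t a (xs @ ys) = walkf t a xs + walkf t (last (a # xs)) ys"
  by (induction xs arbitrary: a) auto

lemma arrival_wf: "(\<forall>q<length xs. w (m + Suc q) = xs ! q) \<Longrightarrow>
   arrival t w (m + length xs) = arrival t w m + walkf t (w m) xs"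
proof (induction xs arbitrary: m)
  case Nil thus ?case by simp
next
  case (Cons x xs)
  have wx: "w (Suc m) = x" using Cons.prems by force
  have "\<forall>q<length xs. w (Suc m + Suc q) = xs ! q" using Cons.prems by force
  hence "arrival t w (Suc m + length xs) = arrival t w (Suc m) + walkf t (w (Suc m)) xs" using Cons.IH by blast
  thus ?case using wx by (simp add: arrival_Suc)
qed

lemma wf_map_upt: "walkf t a (map g [0..<Suc r]) = tt t a (g 0) + (\<Sum>q<r. tt t (g q) (g (Suc q)))"
proof (induction r)
  case 0 thus ?case by simp
next
  case (Suc r)
  have "map g [0..<Suc (Suc r)] = map g [0..<Suc r] @ [g (Suc r)]" by simp
  moreover have "last (a # map g [0..<Suc r]) = g r" by (simp add: last_map)
  ultimately show ?case using Suc.IH by (simp add: wf_append)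
qed

lemma wf_concat:
  assumes "\<forall>i\<in>set js. \<forall>a<n. walkf t a (g i) \<le> c \<and> set (g i) \<subseteq> {..<n}"
  shows "a < n \<Longrightarrow> walkf t a (concat (map g js)) \<le> real (length js) * c"
  using assms
proof (induction js arbitrary: a)
  case Nil thus ?case by simp
next
  case (Cons i js)
  have gs: "set (g i) \<subseteq> {..<n}" using Cons.prems by auto
  have "last (a # g i) \<in> set (a # g i)" by (rule last_in_set) simp
  hence l: "last (a # g i) < n" using gs Cons.prems(1) by auto
  have "walkf t a (concat (map g (i # js))) = walkf t a (g i) + walkf t (last (a # g i)) (concat (map g js))"
    by (simp add: wf_append)
  also have "\<dots> \<le> c + real (length js) * c"
    using Cons.IH[OF l] Cons.prems by (intro add_mono) auto
  finally show ?case by (simp add: algebra_simps)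
qed

lemma wf_set: "set xs \<subseteq> {..<n} \<Longrightarrow> a < n \<Longrightarrow> bgt_instance n h t \<Longrightarrow> 0 \<le> walkf t a xs"
  by (induction xs arbitrary: a) (auto intro!: add_nonneg_nonneg tt_nonneg)

lemma flat_idx:
  assumes ne: "\<forall>j. ws !! j \<noteq> []" and q: "q < length (ws !! k)"
  shows "flat ws !! ((\<Sum>j<k. length (ws !! j)) + q) = (ws !! k) ! q"
  using ne q
proof (induction k arbitrary: ws)
  case 0
  have "\<forall>xs\<in>sset ws. xs \<noteq> []" using 0 by (simp add: sset_range)
  thus ?case using flat_snth[of ws q] 0 by simp
next
  case (Suc k)
  have sne: "\<forall>xs\<in>sset ws. xs \<noteq> []" using Suc.prems by (simp add: sset_range)
  have ne2: "\<forall>j. stl ws !! j \<noteq> []" using Suc.prems(1) by (metis snth.simps(2))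
  have sum: "(\<Sum>j<Suc k. length (ws !! j)) = length (shd ws) + (\<Sum>j<k. length (stl ws !! j))"
    by (subst sum.lessThan_Suc_shift) simp
  have q2: "q < length (stl ws !! k)" using Suc.prems(2) by simp
  have "flat ws !! ((\<Sum>j<Suc k. length (ws !! j)) + q)
        = flat (stl ws) !! ((\<Sum>j<k. length (stl ws !! j)) + q)"
    unfolding sum using flat_snth[OF sne] by simp
  also have "\<dots> = (stl ws !! k) ! q" using Suc.IH[OF ne2 q2] .
  finally show ?case by simp
qed

lemma et_multi:
  assumes B: "bgt_instance n h t" and Vn: "V \<subseteq> {..<n}" and sp: "spanning_tree V E"
    and c2: "2 \<le> card V" and et: "euler_tour V E cs"
  shows "cs \<noteq> []" "set cs = V" "(\<Sum>k<length cs. tF t cs k) = 2 * tree_weight t E"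
proof -
  have finV: "finite V" using Vn finite_subset by blast
  have finE: "finite E" using spt_finE[OF sp finV] .
  have sub: "E \<subseteq> {(a,b). a \<in> V \<and> b \<in> V \<and> a < b}" and con: "\<forall>a\<in>V. \<forall>b\<in>V. (a,b) \<in> (E \<union> E\<inverse>)\<^sup>*"
    using sp unfolding spanning_tree_def by auto
  have c1: "card V \<noteq> 1" using c2 by simp
  define pr where "pr k = (cs ! k, cs ! ((k + 1) mod length cs))" for k
  have ne: "cs \<noteq> []" and M: "mset (map pr [0..<length cs]) = mset_set (E \<union> E\<inverse>)"
    using et c1 unfolding euler_tour_def pr_def by auto
  show "cs \<noteq> []" by (rule ne)
  have finEE: "finite (E \<union> E\<inverse>)" using finE by simp
  have setpr: "set (map pr [0..<length cs]) = E \<union> E\<inverse>"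
    using arg_cong[OF M, of set_mset] finEE by simp
  show "set cs = V"
  proof (rule equalityI)
    show "set cs \<subseteq> V"
    proof
      fix x assume "x \<in> set cs"
      then obtain k where k: "k < length cs" "x = cs ! k" by (auto simp: in_set_conv_nth)
      hence "pr k \<in> E \<union> E\<inverse>" using setpr by auto
      hence "(cs ! k, cs ! ((k + 1) mod length cs)) \<in> E \<union> E\<inverse>" by (simp add: pr_def)
      hence "cs ! k \<in> V" using sub by blast
      thus "x \<in> V" using k by simp
    qed
  next
    show "V \<subseteq> set cs"
    proof
      fix v assume v: "v \<in> V"
      have "1 \<le> card (V - {v})" using c2 v finV by (simp add: card_Diff_singleton)
      hence "V - {v} \<noteq> {}" by (metis card.empty not_one_le_zero)
      then obtain u where u: "u \<in> V" "u \<noteq> v" by blast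
      have vu: "(v,u) \<in> (E \<union> E\<inverse>)\<^sup>*" using con v u by blast
      obtain c where "(v,c) \<in> E \<union> E\<inverse>"
        using vu
      proof (cases rule: converse_rtranclE)
        case base thus ?thesis using u(2) by simp
      next
        case (step y) thus ?thesis using that by blast
      qed
      hence "(v,c) \<in> set (map pr [0..<length cs])" using setpr by simp
      then obtain k where "k < length cs" "pr k = (v,c)" by auto
      thus "v \<in> set cs" unfolding pr_def by auto
    qed
  qed
  have "(\<Sum>k<length cs. tF t cs k) = (\<Sum>k<length cs. case_prod (tt t) (pr k))"
    unfolding tF_def pr_def by simp
  also have "\<dots> = sum_list (map (case_prod (tt t)) (map pr [0..<length cs]))"
    by (simp add: sum_list_sum_nth atLeast0LessThan)
  also have "\<dots> = sum_mset (image_mset (case_prod (tt t)) (mset (map pr [0..<length cs])))"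
    by (metis mset_map sum_mset_sum_list)
  also have "\<dots> = sum (case_prod (tt t)) (E \<union> E\<inverse>)" unfolding M by (simp add: sum_unfold_sum_mset)
  also have "\<dots> = sum (case_prod (tt t)) E + sum (case_prod (tt t)) (E\<inverse>)"
  proof (rule sum.union_disjoint)
    show "E \<inter> E\<inverse> = {}"
    proof (rule ccontr)
      assume "E \<inter> E\<inverse> \<noteq> {}"
      then obtain a b where ab: "(a,b) \<in> E" "(b,a) \<in> E" by auto
      have "a < b" using ab(1) sub by blast
      moreover have "b < a" using ab(2) sub by blast
      ultimately show False by simp
    qed
  qed (use finE in auto)
  also have "sum (case_prod (tt t)) (E\<inverse>) = sum (case_prod (tt t) \<circ> prod.swap) E"
  proof -
    have "E\<inverse> = prod.swap ` E" by auto
    moreover have "inj_on prod.swap E" by (rule inj_swap)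
    ultimately show ?thesis by (simp add: sum.reindex)
  qed
  also have "sum (case_prod (tt t) \<circ> prod.swap) E = sum (case_prod (tt t)) E"
  proof (rule sum.cong)
    fix x assume "x \<in> E"
    then obtain a b where x: "x = (a,b)" "a \<in> V" "b \<in> V" using sub by blast
    hence "a < n" "b < n" using Vn by auto
    thus "(case_prod (tt t) \<circ> prod.swap) x = case_prod (tt t) x" using x tt_sym[OF B] by simp
  qed simp
  also have "sum (case_prod (tt t)) E = tree_weight t E"
    unfolding tree_weight_def by (rule sum.cong) (use sub in \<open>auto simp: tt_def\<close>)
  finally show "(\<Sum>k<length cs. tF t cs k) = 2 * tree_weight t E" by simp
qed

lemma tw_pos:
  assumes B: "bgt_instance n h t" and Vn: "V \<subseteq> {..<n}" and sp: "spanning_tree V E" and c2: "2 \<le> card V"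
  shows "0 < tree_weight t E"
proof -
  have finV: "finite V" using Vn finite_subset by blast
  have finE: "finite E" using spt_finE[OF sp finV] .
  have sub: "E \<subseteq> {(a,b). a \<in> V \<and> b \<in> V \<and> a < b}" and cE: "card E + 1 = card V"
    using sp unfolding spanning_tree_def by auto
  have "E \<noteq> {}"
  proof
    assume "E = {}"
    hence "card V = 1" using cE by simp
    thus False using c2 by simp
  qed
  moreover have "\<forall>x\<in>E. 0 < case_prod t x"
  proof
    fix x assume "x \<in> E"
    then obtain a b where x: "x = (a,b)" "a \<in> V" "b \<in> V" "a < b" using sub by blast
    hence "a < n" "b < n" "a \<noteq> b" using Vn by auto
    thus "0 < case_prod t x" using x B unfolding bgt_instance_def by simp
  qed
  ultimately show ?thesis unfolding tree_weight_def using finE by (intro sum_pos) auto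
qed




lemma alg_round_eq: "alg_round n h t C e (P, j) =
  (concat (map (\<lambda>i. fst (class_step t (Dmax n t) (cls n h i) (C i) (P i))) [1..<alg_s n + 1])
     @ (if cls0 n h = {} then [] else [e j]),
   (\<lambda>i. if 1 \<le> i \<and> i \<le> alg_s n then snd (class_step t (Dmax n t) (cls n h i) (C i) (P i)) else P i,
    if cls0 n h = {} then j else (j + 1) mod card (cls0 n h)))"
  unfolding alg_round_def Let_def fst_conv snd_conv by simp

lemma last_lt: "set xs \<subseteq> {..<n} \<Longrightarrow> (a::nat) < n \<Longrightarrow> last (a # xs) < n"
proof (induction xs arbitrary: a)
  case Nil thus ?case by simp
next
  case (Cons x xs) thus ?case by simp
qed

lemma cls_sub: "cls n h i \<subseteq> {..<n}" unfolding cls_def by auto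
lemma cls0_sub: "cls0 n h \<subseteq> {..<n}" unfolding cls0_def by auto
lemma cls_fin: "finite (cls n h i)" by (rule finite_subset[OF cls_sub]) simp
lemma cls0_fin: "finite (cls0 n h)" by (rule finite_subset[OF cls0_sub]) simp

locale algo =
  fixes n :: nat and h :: "nat \<Rightarrow> real" and t :: "nat \<Rightarrow> nat \<Rightarrow> real"
    and T :: "nat \<Rightarrow> (nat \<times> nat) set" and C :: "nat \<Rightarrow> nat list" and p0 :: "nat \<Rightarrow> nat"
    and e :: "nat \<Rightarrow> nat"
  assumes n2: "2 \<le> n" and B: "bgt_instance n h t" and s1: "(\<Sum>i<n. h i) = 1"
    and trees: "\<forall>i\<in>{1..alg_s n}. cls n h i \<noteq> {} \<longrightarrow>
        min_spanning_tree t (cls n h i) (T i) \<and> euler_tour (cls n h i) (T i) (C i) \<and>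
        p0 i < length (C i)"
    and bij: "bij_betw e {..<card (cls0 n h)} (cls0 n h)"
begin

abbreviation "D \<equiv> Dmax n t"
abbreviation "s \<equiv> alg_s n"
abbreviation "V0 \<equiv> cls0 n h"
abbreviation "l0 \<equiv> card (cls0 n h)"

definition "f = (\<lambda>st. snd (alg_round n h t C e st))"
definition "stt k = (f ^^ k) (p0, 0)"
definition "P k = fst (stt k)"
definition "J k = snd (stt k)"
definition "phase k i = fst (class_step t D (cls n h i) (C i) (P k i))"
definition "rho k = fst (alg_round n h t C e (stt k))"
definition "W = alg_walk n h t C p0 e"

lemma stt_eq: "stt k = (P k, J k)" unfolding P_def J_def by simp

lemma rho_eq: "rho k = concat (map (phase k) [1..<s+1]) @ (if V0 = {} then [] else [e (J k)])"
  unfolding rho_def phase_def stt_eq[of k] alg_round_eq by simp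

lemma P0: "P 0 = p0" and J0: "J 0 = 0" unfolding P_def J_def stt_def by simp_all

lemma stt_Suc: "stt (Suc k) = snd (alg_round n h t C e (stt k))"
  unfolding stt_def f_def by simp

lemma stt_Suc': "stt (Suc k) = snd (alg_round n h t C e (P k, J k))"
  using stt_Suc[of k] stt_eq[of k] by simp

lemma P_Suc: "P (Suc k) i = (if 1 \<le> i \<and> i \<le> s then snd (class_step t D (cls n h i) (C i) (P k i)) else P k i)"
proof -
  have "P (Suc k) = fst (stt (Suc k))" by (simp add: P_def)
  thus ?thesis unfolding stt_Suc' alg_round_eq by simp
qed

lemma J_Suc: "J (Suc k) = (if V0 = {} then J k else (J k + 1) mod l0)"
proof -
  have "J (Suc k) = snd (stt (Suc k))" by (simp add: J_def)
  thus ?thesis unfolding stt_Suc' alg_round_eq by simp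
qed

lemma l0_pos: "V0 \<noteq> {} \<Longrightarrow> 0 < l0" using cls0_fin by (simp add: card_gt_0_iff)

lemma J_eq: "V0 \<noteq> {} \<Longrightarrow> J k = k mod l0"
proof (induction k)
  case 0 thus ?case by (simp add: J0)
next
  case (Suc k) thus ?case by (simp add: J_Suc mod_Suc_eq)
qed

lemma eJ: "V0 \<noteq> {} \<Longrightarrow> e (J k) \<in> V0"
proof -
  assume ne: "V0 \<noteq> {}"
  have "J k < l0" using J_eq[OF ne] l0_pos[OF ne] by simp
  thus ?thesis using bij unfolding bij_betw_def by auto
qed

context
  fixes i assumes i: "i \<in> {1..s}" and ne: "cls n h i \<noteq> {}"
begin

lemma mst: "min_spanning_tree t (cls n h i) (T i)" and et: "euler_tour (cls n h i) (T i) (C i)"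
  and p0l: "p0 i < length (C i)" using trees i ne by auto

lemma spt: "spanning_tree (cls n h i) (T i)" using mst unfolding min_spanning_tree_def by blast

lemma card_pos: "1 \<le> card (cls n h i)" using ne cls_fin by (simp add: Suc_le_eq card_gt_0_iff)

lemma set_C: "set (C i) = cls n h i" and C_ne: "C i \<noteq> []"
proof -
  have "set (C i) = cls n h i \<and> C i \<noteq> []"
  proof (cases "card (cls n h i) = 1")
    case True
    then obtain x where x: "cls n h i = {x}" by (metis card_1_singletonE)
    hence "C i = [x]" using et True unfolding euler_tour_def by simp
    thus ?thesis using x by simp
  next
    case False
    hence c2: "2 \<le> card (cls n h i)" using card_pos by simp
    show ?thesis using et_multi(1,2)[OF B cls_sub spt c2 et] by simp
  qed
  thus "set (C i) = cls n h i" "C i \<noteq> []" by auto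
qed

lemma C_lt: "x \<in> set (C i) \<Longrightarrow> x < n" using set_C cls_sub[of n h i] by auto

definition "rr k = tour_steps t D (C i) (P k i)"

lemma Lsum: "2 \<le> card (cls n h i) \<Longrightarrow> (\<Sum>k<length (C i). tF t (C i) k) = 2 * tree_weight t (T i)"
  using et_multi(3)[OF B cls_sub spt _ et] by simp

lemma Lpos: "2 \<le> card (cls n h i) \<Longrightarrow> 0 < (\<Sum>k<length (C i). tF t (C i) k)"
  using Lsum tw_pos[OF B cls_sub spt] by simp

lemma class_step_multi: "2 \<le> card (cls n h i) \<Longrightarrow>
  class_step t D (cls n h i) (C i) (P k i) =
   (map (\<lambda>q. C i ! ((P k i + q) mod length (C i))) [0..<rr k + 1], (P k i + rr k) mod length (C i))"
  unfolding class_step_def rr_def using ne by (simp add: Let_def)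

lemma class_step_single: "card (cls n h i) = 1 \<Longrightarrow>
  class_step t D (cls n h i) (C i) (P k i) = ([C i ! P k i], P k i)"
  unfolding class_step_def using ne by simp

lemma P_lt: "P k i < length (C i)"
proof (induction k)
  case 0 thus ?case using p0l by (simp add: P0)
next
  case (Suc k)
  have iss: "1 \<le> i \<and> i \<le> s" using i by simp
  show ?case
  proof (cases "card (cls n h i) = 1")
    case True thus ?thesis using Suc.IH iss by (simp add: P_Suc class_step_single)
  next
    case False
    hence "2 \<le> card (cls n h i)" using card_pos by simp
    thus ?thesis using iss C_ne by (simp add: P_Suc class_step_multi)
  qed
qed

lemma phase_single: "card (cls n h i) = 1 \<Longrightarrow> set (phase k i) = cls n h i"
proof -
  assume c1: "card (cls n h i) = 1"
  then obtain x where x: "cls n h i = {x}" by (metis card_1_singletonE)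
  hence "C i = [x]" using et c1 unfolding euler_tour_def by simp
  hence "C i ! P k i = x" using P_lt[of k] by simp
  moreover have "phase k i = [C i ! P k i]" unfolding phase_def using class_step_single[OF c1, of k] by simp
  ultimately show ?thesis using x by simp
qed

lemma phase_multi: "2 \<le> card (cls n h i) \<Longrightarrow>
  phase k i = map (\<lambda>q. C i ! ((P k i + q) mod length (C i))) [0..<rr k + 1]"
  unfolding phase_def by (simp add: class_step_multi)

lemma P_multi: "2 \<le> card (cls n h i) \<Longrightarrow> P (Suc k) i = (P k i + rr k) mod length (C i)"
  using i by (simp add: P_Suc class_step_multi)

lemma rr_D: "2 \<le> card (cls n h i) \<Longrightarrow> D \<le> tour_len t (C i) (P k i) (rr k)"
  unfolding rr_def tour_steps_def
  by (rule LeastI_ex, rule tour_len_exists) (use C_ne Lpos in auto)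

lemma rr_less: "2 \<le> card (cls n h i) \<Longrightarrow> 0 < rr k \<and> tour_len t (C i) (P k i) (rr k - 1) < D"
proof -
  assume c2: "2 \<le> card (cls n h i)"
  have Dp: "0 < D" using D_pos[OF n2 B] .
  have "rr k \<noteq> 0"
  proof
    assume "rr k = 0"
    hence "D \<le> tour_len t (C i) (P k i) 0" using rr_D[OF c2, of k] by simp
    thus False using Dp by (simp add: tour_len_def)
  qed
  moreover have "\<not> D \<le> tour_len t (C i) (P k i) (rr k - 1)"
    unfolding rr_def tour_steps_def
    by (rule not_less_Least) (use \<open>rr k \<noteq> 0\<close> in \<open>simp add: rr_def tour_steps_def\<close>)
  ultimately show ?thesis by simp
qed

lemma phase_wf: "a < n \<Longrightarrow> walkf t a (phase k i) \<le> 3 * D \<and> set (phase k i) \<subseteq> {..<n}"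
proof -
  assume a: "a < n"
  have pk: "P k i < length (C i)" by (rule P_lt)
  have Cn: "C i ! j < n" if "j < length (C i)" for j using C_lt that by simp
  show ?thesis
  proof (cases "card (cls n h i) = 1")
    case True
    have "phase k i = [C i ! P k i]" unfolding phase_def using True by (simp add: class_step_single)
    moreover have "tt t a (C i ! P k i) \<le> D" using tt_le_D'[OF n2 B a Cn[OF pk]] .
    moreover have "D \<le> 3 * D" using D_pos[OF n2 B] by simp
    ultimately show ?thesis using Cn[OF pk] by simp
  next
    case False
    hence c2: "2 \<le> card (cls n h i)" using card_pos by simp
    define g where "g q = C i ! ((P k i + q) mod length (C i))" for q
    have gn: "g q < n" for q unfolding g_def using Cn C_ne by simp
    obtain r' where r': "rr k = Suc r'" using rr_less[OF c2, of k] by (cases "rr k") auto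
    have tl: "tour_len t (C i) (P k i) r = (\<Sum>q<r. tt t (g q) (g (Suc q)))" for r
      unfolding tour_len_def g_def by simp
    have ph: "phase k i = map g [0..<Suc (Suc r')]" unfolding phase_multi[OF c2] g_def r' by simp
    have "walkf t a (phase k i) = tt t a (g 0) + (\<Sum>q<Suc r'. tt t (g q) (g (Suc q)))"
      unfolding ph wf_map_upt ..
    also have "\<dots> = tt t a (g 0) + tour_len t (C i) (P k i) r' + tt t (g r') (g (Suc r'))"
      by (simp add: tl)
    also have "\<dots> \<le> D + D + D"
    proof -
      have "tour_len t (C i) (P k i) r' < D" using rr_less[OF c2, of k] r' by simp
      thus ?thesis using tt_le_D'[OF n2 B a gn] tt_le_D'[OF n2 B gn gn]
        by (intro add_mono) auto
    qed
    finally have "walkf t a (phase k i) \<le> 3 * D" by simp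
    moreover have "set (phase k i) \<subseteq> {..<n}" unfolding phase_multi[OF c2] using Cn C_ne by auto
    ultimately show ?thesis by simp
  qed
qed

end

lemma phase_empty: "cls n h i = {} \<Longrightarrow> phase k i = []"
  unfolding phase_def class_step_def by simp

lemma phase_wf_all: assumes "i \<in> {1..s}" "a < n"
  shows "walkf t a (phase k i) \<le> 3 * D \<and> set (phase k i) \<subseteq> {..<n}"
proof (cases "cls n h i = {}")
  case True thus ?thesis using phase_empty[of i k] D_pos[OF n2 B] by simp
next
  case False
  thus ?thesis using phase_wf[OF assms(1) False assms(2)] by blast
qed

lemma rho_sub: "set (rho k) \<subseteq> {..<n}"
proof
  fix x assume x: "x \<in> set (rho k)"
  have n0: "0 < n" using n2 by simp
  show "x \<in> {..<n}"
  proof (cases "x \<in> set (concat (map (phase k) [1..<s+1]))")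
    case True
    then obtain i where i0: "i \<in> set [1..<s+1]" "x \<in> set (phase k i)" by auto
    hence i: "i \<in> {1..s}" "x \<in> set (phase k i)" by auto
    thus ?thesis using phase_wf_all[OF i(1) n0, of k] by blast
  next
    case False
    hence "V0 \<noteq> {}" "x = e (J k)" using x unfolding rho_eq by (auto split: if_splits)
    thus ?thesis using eJ[of k] cls0_sub[of n h] by auto
  qed
qed

lemma rho_wf: "a < n \<Longrightarrow> walkf t a (rho k) \<le> (3 * real s + 1) * D"
proof -
  assume a: "a < n"
  let ?c = "concat (map (phase k) [1..<s+1])"
  have all: "\<forall>i\<in>set [1..<s+1]. \<forall>a<n. walkf t a (phase k i) \<le> 3 * D \<and> set (phase k i) \<subseteq> {..<n}"
  proof (intro ballI allI impI)
    fix i b assume "i \<in> set [1..<s+1]" "b < n"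
    moreover hence "i \<in> {1..s}" by auto
    ultimately show "walkf t b (phase k i) \<le> 3 * D \<and> set (phase k i) \<subseteq> {..<n}"
      using phase_wf_all by blast
  qed
  have c: "walkf t a ?c \<le> real (length [1..<s+1]) * (3 * D)"
    by (rule wf_concat[OF all a])
  have cs: "set ?c \<subseteq> {..<n}"
  proof
    fix x assume "x \<in> set ?c"
    then obtain i where i: "i \<in> set [1..<s+1]" "x \<in> set (phase k i)" by auto
    have "(0::nat) < n" using n2 by simp
    hence "set (phase k i) \<subseteq> {..<n}" using all i(1) by blast
    thus "x \<in> {..<n}" using i(2) by blast
  qed
  have l: "last (a # ?c) < n" by (rule last_lt[OF cs a])
  have v0: "walkf t (last (a # ?c)) (if V0 = {} then [] else [e (J k)]) \<le> D"
  proof (cases "V0 = {}")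
    case True thus ?thesis using D_pos[OF n2 B] by simp
  next
    case False
    have eq: "(if V0 = {} then [] else [e (J k)]) = [e (J k)]" using False by simp
    have "e (J k) < n" using eJ[OF False] cls0_sub[of n h] by blast
    hence "tt t (last (a # ?c)) (e (J k)) \<le> D" by (rule tt_le_D'[OF n2 B l])
    thus ?thesis unfolding eq walkf.simps by linarith
  qed
  have "walkf t a (rho k) = walkf t a ?c + walkf t (last (a # ?c)) (if V0 = {} then [] else [e (J k)])"
    unfolding rho_eq by (simp add: wf_append)
  also have "\<dots> \<le> real s * (3 * D) + D"
  proof -
    have le: "length [1..<s+1] = s" by (simp only: length_upt)
    show ?thesis using c v0 unfolding le by linarith
  qed
  finally show ?thesis by (simp add: algebra_simps)
qed

end




context algo begin

definition "S0 k = (\<Sum>j<k. length (rho j))"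
definition "start k = arrival t W (S0 k)"
definition "R = (3 * real s + 1) * D"
definition "win v K \<longleftrightarrow> (\<forall>k. \<exists>j. k \<le> j \<and> j < k + K \<and> v \<in> set (rho j))"

lemma R_nonneg: "0 \<le> R" unfolding R_def using D_pos[OF n2 B] by simp

lemma phase_ne: assumes i: "i \<in> {1..s}" and ne: "cls n h i \<noteq> {}" shows "phase k i \<noteq> []"
proof (cases "card (cls n h i) = 1")
  case True thus ?thesis using phase_single[OF i ne True, of k] ne by auto
next
  case False
  hence "2 \<le> card (cls n h i)" using card_pos[OF i ne] by simp
  thus ?thesis using phase_multi[OF i ne] by simp
qed

lemma rho_ne: "rho k \<noteq> []"
proof (cases "V0 = {}")
  case False thus ?thesis unfolding rho_eq by simp
next
  case True
  have "0 < n" using n2 by simp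
  then obtain i where i: "i \<in> {1..s}" "0 \<in> cls n h i" using cover[OF n2 B s1] True by blast
  hence "phase k i \<noteq> []" using phase_ne[OF i(1)] by blast
  moreover have "i \<in> set [1..<s+1]" using i(1) by auto
  hence mem: "phase k i \<in> set (map (phase k) [1..<s+1])" unfolding set_map by (rule imageI)
  ultimately have "concat (map (phase k) [1..<s+1]) \<noteq> []"
    by (metis concat_eq_Nil_conv)
  thus ?thesis unfolding rho_eq by (metis append_is_Nil_conv)
qed

definition "ws = smap (\<lambda>st. fst (alg_round n h t C e st)) (siterate f (p0, 0))"

lemma ws_nth: "ws !! j = rho j"
  unfolding ws_def rho_def stt_def by simp

lemma W0: "W 0 = 0" unfolding W_def alg_walk_def by simp

lemma W_Suc: "W (Suc m) = flat ws !! m"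
  unfolding W_def alg_walk_def ws_def f_def by simp

lemma W_idx: "q < length (rho k) \<Longrightarrow> W (S0 k + Suc q) = rho k ! q"
proof -
  assume q: "q < length (rho k)"
  have ne: "\<forall>j. ws !! j \<noteq> []" using rho_ne by (simp add: ws_nth)
  have "W (S0 k + Suc q) = flat ws !! ((\<Sum>j<k. length (ws !! j)) + q)"
    unfolding S0_def ws_nth by (simp add: W_Suc)
  also have "\<dots> = (ws !! k) ! q" by (rule flat_idx[OF ne]) (use q in \<open>simp add: ws_nth\<close>)
  finally show ?thesis by (simp add: ws_nth)
qed

lemma W_lt: "W m < n"
proof (cases m)
  case 0 thus ?thesis using n2 by (simp add: W0)
next
  case (Suc m')
  have ne: "\<forall>xs\<in>sset ws. xs \<noteq> []" using rho_ne by (simp add: sset_range ws_nth)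
  have "W m \<in> sset (flat ws)" unfolding Suc W_Suc by simp
  hence "W m \<in> (\<Union>xs\<in>sset ws. set xs)" using sset_flat[OF ne] by simp
  then obtain j where "W m \<in> set (rho j)" by (auto simp: sset_range ws_nth)
  thus ?thesis using rho_sub[of j] by blast
qed

lemma W_all: "\<forall>m. W m < n" using W_lt by blast

lemma S0_Suc: "S0 (Suc k) = S0 k + length (rho k)" unfolding S0_def by simp

lemma start0: "start 0 = 0" unfolding start_def S0_def by simp

lemma start_Suc: "start (Suc k) = start k + walkf t (W (S0 k)) (rho k)"
proof -
  have "\<forall>q<length (rho k). W (S0 k + Suc q) = rho k ! q" using W_idx by blast
  from arrival_wf[OF this] show ?thesis unfolding start_def S0_Suc by simp
qed

lemma start_Suc_le: "start (Suc k) \<le> start k + R"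
  using start_Suc[of k] rho_wf[OF W_lt] unfolding R_def by simp

lemma start_mono: "k \<le> j \<Longrightarrow> start k \<le> start j"
proof -
  assume "k \<le> j"
  hence "S0 k \<le> S0 j" unfolding S0_def by (intro sum_mono2) auto
  thus ?thesis unfolding start_def by (rule arrival_mono[OF B W_all])
qed

lemma start_add: "start (k + d) \<le> start k + real d * R"
proof (induction d)
  case 0 thus ?case by simp
next
  case (Suc d)
  have "start (k + Suc d) \<le> start (k + d) + R" using start_Suc_le[of "k + d"] by simp
  thus ?case using Suc.IH by (simp add: algebra_simps)
qed

lemma visit: "v \<in> set (rho j) \<Longrightarrow> \<exists>m. W m = v \<and> start j \<le> arrival t W m \<and> arrival t W m \<le> start (Suc j)"
proof -
  assume "v \<in> set (rho j)"
  then obtain q where q: "q < length (rho j)" "rho j ! q = v" by (auto simp: in_set_conv_nth)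
  have "W (S0 j + Suc q) = v" using W_idx[OF q(1)] q(2) by simp
  moreover have "start j \<le> arrival t W (S0 j + Suc q)" unfolding start_def
    by (rule arrival_mono[OF B W_all]) simp
  moreover have "arrival t W (S0 j + Suc q) \<le> start (Suc j)" unfolding start_def S0_Suc
    by (rule arrival_mono[OF B W_all]) (use q in simp)
  ultimately show ?thesis by blast
qed

lemma win_mono: "win v K \<Longrightarrow> K \<le> K' \<Longrightarrow> win v K'"
  unfolding win_def by (meson add_le_cancel_left less_le_trans)

lemma visit_win: "win v K \<Longrightarrow> \<exists>m. W m = v \<and> start k \<le> arrival t W m \<and> arrival t W m \<le> start (k + K)"
proof -
  assume "win v K"
  then obtain j where j: "k \<le> j" "j < k + K" "v \<in> set (rho j)" unfolding win_def by blast
  then obtain m where m: "W m = v" "start j \<le> arrival t W m" "arrival t W m \<le> start (Suc j)"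
    using visit by blast
  have "start k \<le> start j" using j(1) by (rule start_mono)
  moreover have "start (Suc j) \<le> start (k + K)" using j(2) by (intro start_mono) simp
  ultimately show ?thesis using m by force
qed

lemma unbounded:
  assumes w0: "win 0 K0" and w1: "win 1 K1"
  shows "\<exists>k. x < start k"
proof -
  define K where "K = K0 + K1"
  have wa: "win 0 K" "win 1 K" using win_mono[OF w0] win_mono[OF w1] unfolding K_def by auto
  have n1: "0 < n" "1 < n" using n2 by auto
  define \<delta> where "\<delta> = tt t 0 1"
  have dpos: "0 < \<delta>" unfolding \<delta>_def using tt_pos[OF B n1] by simp
  have step: "start k + \<delta> \<le> start (k + K)" for k
  proof -
    obtain m0 where m0: "W m0 = 0" "start k \<le> arrival t W m0" "arrival t W m0 \<le> start (k + K)"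
      using visit_win[OF wa(1)] by blast
    obtain m1 where m1: "W m1 = 1" "start k \<le> arrival t W m1" "arrival t W m1 \<le> start (k + K)"
      using visit_win[OF wa(2)] by blast
    show ?thesis
    proof (cases "m0 \<le> m1")
      case True
      thus ?thesis using arrival_seg[OF B W_all True] m0 m1 unfolding \<delta>_def by simp
    next
      case False
      hence m10: "m1 \<le> m0" by simp
      thus ?thesis using arrival_seg[OF B W_all m10] m0 m1 tt_sym[OF B n1] unfolding \<delta>_def by simp
    qed
  qed
  have lin: "real m * \<delta> \<le> start (m * K)" for m
  proof (induction m)
    case 0 thus ?case by (simp add: start0)
  next
    case (Suc m)
    have "start (m * K) + \<delta> \<le> start (m * K + K)" by (rule step)
    thus ?case using Suc.IH by (simp add: algebra_simps)
  qed
  obtain m :: nat where "x / \<delta> < real m" using reals_Archimedean2 by blast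
  hence "x < real m * \<delta>" using dpos by (simp add: field_simps)
  thus ?thesis using lin[of m] by (intro exI[of _ "m * K"]) simp
qed

lemma height_alg:
  assumes wv: "win v K" and v: "v < n" and unb: "\<forall>x. \<exists>k. x < start k" and tau: "0 \<le> \<tau>"
  shows "height h t W v \<tau> \<le> h v * ((real K + 1) * R)"
proof (rule height_from_visits)
  show "0 \<le> h v" using bgt_pos[OF B v] by simp
  show "0 \<le> \<tau>" by (rule tau)
  define k1 where "k1 = (LEAST k. \<tau> < start k)"
  have k1: "\<tau> < start k1" unfolding k1_def by (rule LeastI_ex) (use unb in blast)
  have k1p: "k1 \<noteq> 0"
  proof
    assume "k1 = 0"
    thus False using k1 tau start0 by simp
  qed
  define k' where "k' = k1 - 1"
  have kk: "k1 = Suc k'" unfolding k'_def using k1p by simp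
  have sk': "start k' \<le> \<tau>"
  proof -
    have "\<not> \<tau> < start k'" unfolding k1_def[symmetric] k'_def
      by (rule not_less_Least) (use k1p in \<open>simp add: k1_def\<close>)
    thus ?thesis by simp
  qed
  show "\<tau> \<le> (real K + 1) * R \<or> (\<exists>k. W k = v \<and> \<tau> - (real K + 1) * R \<le> arrival t W k \<and> arrival t W k \<le> \<tau>)"
  proof (cases "K \<le> k'")
    case True
    obtain m where m: "W m = v" "start (k' - K) \<le> arrival t W m" "arrival t W m \<le> start (k' - K + K)"
      using visit_win[OF wv] by blast
    have "start (Suc k') \<le> start (k' - K) + real (Suc K) * R"
      using start_add[of "k' - K" "Suc K"] True by simp
    hence "\<tau> - (real K + 1) * R \<le> arrival t W m" using k1 kk m(2) by (simp add: algebra_simps)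
    moreover have "arrival t W m \<le> \<tau>" using m(3) True sk' by simp
    ultimately show ?thesis using m(1) by blast
  next
    case False
    have "start (0 + Suc k') \<le> start 0 + real (Suc k') * R" by (rule start_add)
    hence "\<tau> \<le> real (Suc k') * R" using k1 kk start0 by simp
    also have "\<dots> \<le> (real K + 1) * R" using False R_nonneg by (intro mult_right_mono) auto
    finally show ?thesis by simp
  qed
qed

end




context algo begin

definition "LB M \<longleftrightarrow> 0 \<le> M \<and> h 0 * D \<le> 2 * M \<and>
   (\<forall>i\<in>{1..s}. cls n h i \<noteq> {} \<longrightarrow> 2^(i-1) / (real n)^2 * tree_weight t (T i) \<le> M)"

lemma lg1: "1 \<le> log 2 (real n)"
proof -
  have "(2::real) powr 1 \<le> real n" using n2 by simp
  thus ?thesis using le_log_iff[of 2 "real n" 1] n2 by simp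
qed

lemma s_bound: "3 * real s + 1 \<le> 10 * log 2 (real n)"
proof -
  have lp: "0 < log 2 (real n)" using lg1 by simp
  have "real s = of_int \<lceil>2 * log 2 (real n)\<rceil>" using lp by (simp add: alg_s_def)
  moreover have "of_int \<lceil>2 * log 2 (real n)\<rceil> < 2 * log 2 (real n) + 1" by linarith
  ultimately show ?thesis using lg1 by linarith
qed

lemma X_pos: "1 \<le> 3 * real s + 1" by simp

lemma phase_in_rho: "i \<in> {1..s} \<Longrightarrow> set (phase k i) \<subseteq> set (rho k)"
proof -
  assume "i \<in> {1..s}"
  hence "i \<in> set [1..<s+1]" by auto
  hence "phase k i \<in> set (map (phase k) [1..<s+1])" unfolding set_map by (rule imageI)
  hence "set (phase k i) \<subseteq> set (concat (map (phase k) [1..<s+1]))" by auto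
  thus ?thesis unfolding rho_eq by auto
qed

lemma hD: "LB M \<Longrightarrow> v < n \<Longrightarrow> h v * D \<le> 2 * M"
proof -
  assume lb: "LB M" and v: "v < n"
  have "h v \<le> h 0" using bgt_mono[OF B _ v] by simp
  hence "h v * D \<le> h 0 * D" using D_pos[OF n2 B] by (simp add: mult_right_mono)
  thus ?thesis using lb unfolding LB_def by simp
qed

lemma win_V0:
  assumes v: "v \<in> V0"
  shows "\<exists>K\<ge>1. win v K \<and> (\<forall>M. LB M \<longrightarrow> h v * ((real K + 1) * R) \<le> 100 * log 2 (real n) * M)"
proof (intro exI[of _ l0] conjI allI impI)
  have ne: "V0 \<noteq> {}" using v by auto
  have lp: "0 < l0" using l0_pos[OF ne] .
  show "1 \<le> l0" using lp by simp
  have "v \<in> e ` {..<l0}" using v bij unfolding bij_betw_def by simp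
  then obtain j0 where j0: "j0 < l0" "e j0 = v" by auto
  show "win v l0" unfolding win_def
  proof
    fix k
    have "j0 \<in> (\<lambda>q. (k + q) mod l0) ` {..<l0}" using rot_image[OF lp, of k] j0 by simp
    then obtain q where q: "q < l0" "(k + q) mod l0 = j0" by auto
    have "J (k + q) = j0" using J_eq[OF ne] q by simp
    hence "v \<in> set (rho (k + q))" unfolding rho_eq using ne j0 by simp
    thus "\<exists>j. k \<le> j \<and> j < k + l0 \<and> v \<in> set (rho j)" using q by (intro exI[of _ "k + q"]) simp
  next
  qed
  fix M assume lb: "LB M"
  have M0: "0 \<le> M" using lb unfolding LB_def by simp
  have npos: "0 < real n" using n2 by simp
  have hv: "h v \<le> 1 / (real n)^2" using v unfolding cls0_def by simp
  have hv0: "0 \<le> h v" using bgt_pos[OF B] v cls0_sub[of n h] by (meson lessThan_iff less_imp_le subsetD)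
  have l0nn: "l0 \<le> n"
  proof -
    have "l0 \<le> card {..<n}" by (rule card_mono) (simp_all add: cls0_sub)
    thus ?thesis by simp
  qed
  hence l0n: "real l0 \<le> real n" by simp
  have Dn: "D \<le> 2 * M * real n"
  proof -
    have h0: "1 / real n \<le> h 0" using h0_ge[OF B s1] npos by simp
    have "D / real n \<le> h 0 * D" using mult_right_mono[OF h0, of D] D_pos[OF n2 B] by simp
    also have "\<dots> \<le> 2 * M" using lb unfolding LB_def by simp
    finally show ?thesis using npos by (simp add: field_simps)
  qed
  define X where "X = 3 * real s + 1"
  have X1: "1 \<le> X" unfolding X_def by simp
  have R_eq: "R = X * D" unfolding R_def X_def ..
  have "h v * ((real l0 + 1) * R) \<le> (1 / (real n)^2) * ((real n + 1) * (X * (2 * M * real n)))"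
    unfolding R_eq
    by (intro mult_mono hv mult_right_mono l0n Dn) (use X1 M0 npos D_pos[OF n2 B] hv0 l0nn in auto)
  also have "\<dots> = 2 * ((real n + 1) / real n) * X * M" using npos by (simp add: field_simps power2_eq_square)
  also have "\<dots> \<le> 2 * 2 * X * M"
  proof -
    have "(real n + 1) / real n \<le> 2" using npos n2 by (simp add: field_simps)
    hence a: "2 * ((real n + 1) / real n) \<le> 2 * 2" by linarith
    show ?thesis using mult_right_mono[OF mult_right_mono[OF a, of X], of M] X1 M0 by simp
  qed
  also have "\<dots> \<le> 4 * (10 * log 2 (real n)) * M" using s_bound M0 unfolding X_def
    by (intro mult_right_mono) auto
  also have "\<dots> \<le> 100 * log 2 (real n) * M" using lg1 M0 by (intro mult_right_mono) auto
  finally show "h v * ((real l0 + 1) * R) \<le> 100 * log 2 (real n) * M" .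
qed

lemma win_cls:
  assumes i: "i \<in> {1..s}" and v: "v \<in> cls n h i"
  shows "\<exists>K\<ge>1. win v K \<and> (\<forall>M. LB M \<longrightarrow> h v * ((real K + 1) * R) \<le> 100 * log 2 (real n) * M)"
proof -
  have ne: "cls n h i \<noteq> {}" using v by auto
  have vn: "v < n" using v cls_sub[of n h i] by auto
  have hv0: "0 \<le> h v" using bgt_pos[OF B vn] by simp
  have Dp: "0 < D" using D_pos[OF n2 B] .
  define X where "X = 3 * real s + 1"
  have X1: "1 \<le> X" unfolding X_def by simp
  have R_eq: "R = X * D" unfolding R_def X_def ..
  have Xlg: "X \<le> 10 * log 2 (real n)" unfolding X_def by (rule s_bound)
  show ?thesis
  proof (cases "card (cls n h i) = 1")
    case True
    show ?thesis
    proof (intro exI[of _ 1] conjI allI impI)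
      show "(1::nat) \<le> 1" by simp
      show "win v 1" unfolding win_def
      proof
        fix k
        have "v \<in> set (phase k i)" using phase_single[OF i ne True] v by simp
        hence "v \<in> set (rho k)" using phase_in_rho[OF i] by blast
        thus "\<exists>j. k \<le> j \<and> j < k + 1 \<and> v \<in> set (rho j)" by auto
      qed
      fix M assume lb: "LB M"
      have M0: "0 \<le> M" using lb unfolding LB_def by simp
      have "h v * ((real 1 + 1) * R) = 2 * X * (h v * D)" unfolding R_eq by (simp add: algebra_simps)
      also have "\<dots> \<le> 2 * X * (2 * M)" using hD[OF lb vn] X1 by (intro mult_left_mono) auto
      also have "\<dots> = 4 * X * M" by simp
      also have "\<dots> \<le> 4 * (10 * log 2 (real n)) * M" using Xlg M0 by (intro mult_right_mono) auto
      also have "\<dots> \<le> 100 * log 2 (real n) * M" using lg1 M0 by (intro mult_right_mono) auto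
      finally show "h v * ((real 1 + 1) * R) \<le> 100 * log 2 (real n) * M" .
    qed
  next
    case False
    hence c2: "2 \<le> card (cls n h i)" using card_pos[OF i ne] by simp
    define L where "L = (\<Sum>k<length (C i). tF t (C i) k)"
    have Lw: "L = 2 * tree_weight t (T i)" unfolding L_def by (rule Lsum[OF i ne c2])
    have L0: "0 < L" unfolding L_def by (rule Lpos[OF i ne c2])
    define K where "K = nat \<lceil>L / D\<rceil> + 1"
    have cK: "real (nat \<lceil>L / D\<rceil>) = of_int \<lceil>L / D\<rceil>" using L0 Dp by simp
    have Kr: "real K = of_int \<lceil>L / D\<rceil> + 1" unfolding K_def using cK by simp
    have KD: "L < real K * D"
    proof -
      have "L / D \<le> of_int \<lceil>L / D\<rceil>" by linarith
      hence "L / D * D \<le> of_int \<lceil>L / D\<rceil> * D" using Dp by (intro mult_right_mono) auto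
      hence "L \<le> of_int \<lceil>L / D\<rceil> * D" using Dp by simp
      thus ?thesis unfolding Kr using Dp by (simp add: algebra_simps)
    qed
    have Kup: "real K + 1 \<le> L / D + 3" unfolding Kr by linarith
    show ?thesis
    proof (intro exI[of _ K] conjI allI impI)
      show "1 \<le> K" unfolding K_def by simp
      have cov: "\<forall>x\<in>set (C i). \<exists>j. k \<le> j \<and> j < k + K \<and> x \<in> set (rho j)" for k
      proof (rule tour_cover[where p = "\<lambda>k. P k i" and r = "rr i" and D = D])
        show "C i \<noteq> []" by (rule C_ne[OF i ne])
        show "\<forall>k<length (C i). 0 \<le> tF t (C i) k"
        proof (intro allI impI)
          fix k assume k: "k < length (C i)"
          have a: "C i ! k < n" using C_lt[OF i ne] k by simp
          have b: "C i ! ((k + 1) mod length (C i)) < n" using C_lt[OF i ne] C_ne[OF i ne] by simp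
          show "0 \<le> tF t (C i) k" unfolding tF_def by (rule tt_nonneg[OF B a b])
        qed
        show "\<forall>k. P (Suc k) i = (P k i + rr i k) mod length (C i)" using P_multi[OF i ne c2] by blast
        show "\<forall>k. D \<le> tour_len t (C i) (P k i) (rr i k)" using rr_D[OF i ne c2] by blast
        show "\<forall>k q. q \<le> rr i k \<longrightarrow> C i ! ((P k i + q) mod length (C i)) \<in> set (rho k)"
        proof (intro allI impI)
          fix k q assume q: "q \<le> rr i k"
          have "q < rr i k + 1" using q by simp
          hence "q \<in> set [0..<rr i k + 1]" by (simp only: set_upt atLeastLessThan_iff) simp
          hence "C i ! ((P k i + q) mod length (C i)) \<in> set (map (\<lambda>q. C i ! ((P k i + q) mod length (C i))) [0..<rr i k + 1])"
            unfolding set_map by (rule imageI)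
          hence "C i ! ((P k i + q) mod length (C i)) \<in> set (phase k i)"
            unfolding phase_multi[OF i ne c2] .
          thus "C i ! ((P k i + q) mod length (C i)) \<in> set (rho k)" using phase_in_rho[OF i] by blast
        qed
        show "(\<Sum>k<length (C i). tF t (C i) k) < real K * D" using KD unfolding L_def .
      qed
      show "win v K" unfolding win_def using cov set_C[OF i ne] v by blast
      fix M assume lb: "LB M"
      have M0: "0 \<le> M" using lb unfolding LB_def by simp
      define li where "li = 2^(i-1) / (real n)^2"
      have tw: "li * tree_weight t (T i) \<le> M" using lb i ne unfolding LB_def li_def by blast
      have tw0: "0 \<le> tree_weight t (T i)" using L0 Lw by simp
      have hvl: "h v \<le> 2 * li"
      proof -
        have "(2::real)^i = 2 * 2^(i-1)" using i by (cases i) auto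
        thus ?thesis using v unfolding cls_def li_def by simp
      qed
      have "h v * ((real K + 1) * R) \<le> h v * ((L / D + 3) * (X * D))"
        unfolding R_eq using Kup X1 Dp hv0 by (intro mult_left_mono mult_right_mono) auto
      also have "\<dots> = X * (h v * L + 3 * (h v * D))" using Dp by (simp add: field_simps)
      also have "\<dots> \<le> X * (4 * M + 3 * (2 * M))"
      proof -
        have "h v * L \<le> (2 * li) * L" using hvl L0 by (intro mult_right_mono) auto
        also have "\<dots> = 4 * (li * tree_weight t (T i))" unfolding Lw by simp
        also have "\<dots> \<le> 4 * M" using tw by simp
        finally have a: "h v * L \<le> 4 * M" .
        show ?thesis using a hD[OF lb vn] X1 by (intro mult_left_mono) auto
      qed
      also have "\<dots> = 10 * X * M" by simp
      also have "\<dots> \<le> 10 * (10 * log 2 (real n)) * M" using Xlg M0 by (intro mult_right_mono) auto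
      also have "\<dots> = 100 * log 2 (real n) * M" by simp
      finally show "h v * ((real K + 1) * R) \<le> 100 * log 2 (real n) * M" .
    qed
  qed
qed

lemma win_all: "v < n \<Longrightarrow> \<exists>K\<ge>1. win v K \<and> (\<forall>M. LB M \<longrightarrow> h v * ((real K + 1) * R) \<le> 100 * log 2 (real n) * M)"
proof (cases "v \<in> V0")
  case True thus ?thesis by (rule win_V0)
next
  case False
  assume "v < n"
  then obtain i where "i \<in> {1..s}" "v \<in> cls n h i" using cover[OF n2 B s1 _ False] by blast
  thus ?thesis by (rule win_cls)
qed

lemma alg_bound: assumes lb: "LB M" shows "MH n h t W \<le> ereal (100 * log 2 (real n) * M)"
proof (rule MH_le)
  have n1: "0 < n" "1 < n" using n2 by auto
  obtain K0 where "win 0 K0" using win_all[OF n1(1)] by blast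
  moreover obtain K1 where "win 1 K1" using win_all[OF n1(2)] by blast
  ultimately have unb: "\<forall>x. \<exists>k. x < start k" using unbounded by blast
  fix v :: nat and \<tau> :: real assume v: "v < n" and tau: "0 \<le> \<tau>"
  obtain K where K: "win v K" "h v * ((real K + 1) * R) \<le> 100 * log 2 (real n) * M"
    using win_all[OF v] lb by blast
  show "height h t W v \<tau> \<le> 100 * log 2 (real n) * M"
    using height_alg[OF K(1) v unb tau] K(2) by simp
qed

lemma LB_walk:
  assumes w: "w \<in> robot_walks n" and MH: "MH n h t w \<le> ereal M"
  shows "LB M"
proof -
  have W': "\<forall>k. w k < n" and w0: "w 0 = 0" using w unfolding robot_walks_def by auto
  have M0: "0 \<le> M" using M_nonneg[OF _ MH] n2 by simp
  have "h 0 * D \<le> 2 * M" by (rule D_lower[OF n2 B W' w0 MH])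
  moreover have "2^(i-1) / (real n)^2 * tree_weight t (T i) \<le> M"
    if i: "i \<in> {1..s}" and ne: "cls n h i \<noteq> {}" for i
  proof (rule mst_lower[OF B W' MH cls_sub ne])
    show "\<forall>u\<in>cls n h i. 2^(i-1) / (real n)^2 \<le> h u" unfolding cls_def by auto
    show "0 < 2^(i-1) / (real n)^2" using n2 by simp
    show "min_spanning_tree t (cls n h i) (T i)" by (rule mst[OF i ne])
  qed
  ultimately show ?thesis unfolding LB_def using M0 by blast
qed

end




theorem theorem6:
  shows "\<exists>c>0. \<forall>(n::nat) (h::nat \<Rightarrow> real) (t::nat \<Rightarrow> nat \<Rightarrow> real)
            (T::nat \<Rightarrow> (nat \<times> nat) set) (C::nat \<Rightarrow> nat list) (p0::nat \<Rightarrow> nat) (e::nat \<Rightarrow> nat).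
     2 \<le> n \<and> bgt_instance n h t \<and> (\<Sum>i<n. h i) = 1 \<and>
     (\<forall>i\<in>{1..alg_s n}. cls n h i \<noteq> {} \<longrightarrow>
        min_spanning_tree t (cls n h i) (T i) \<and> euler_tour (cls n h i) (T i) (C i) \<and>
        p0 i < length (C i)) \<and>
     bij_betw e {..<card (cls0 n h)} (cls0 n h)
     \<longrightarrow> MH n h t (alg_walk n h t C p0 e) \<le> ereal (c * log 2 (real n)) * OPT n h t"
proof (intro exI[of _ "100::real"] conjI allI impI)
  show "(0::real) < 100" by simp
  fix n :: nat and h :: "nat \<Rightarrow> real" and t :: "nat \<Rightarrow> nat \<Rightarrow> real"
    and T :: "nat \<Rightarrow> (nat \<times> nat) set" and C :: "nat \<Rightarrow> nat list" and p0 :: "nat \<Rightarrow> nat"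
    and e :: "nat \<Rightarrow> nat"
  assume H: "2 \<le> n \<and> bgt_instance n h t \<and> (\<Sum>i<n. h i) = 1 \<and>
     (\<forall>i\<in>{1..alg_s n}. cls n h i \<noteq> {} \<longrightarrow>
        min_spanning_tree t (cls n h i) (T i) \<and> euler_tour (cls n h i) (T i) (C i) \<and>
        p0 i < length (C i)) \<and>
     bij_betw e {..<card (cls0 n h)} (cls0 n h)"
  interpret A: algo n h t T C p0 e
    by (rule algo.intro) (use H in auto)
  define a where "a = 100 * log 2 (real n)"
  have a0: "0 < a" unfolding a_def using A.lg1 by simp
  have key: "MH n h t (alg_walk n h t C p0 e) \<le> ereal (a * M)"
    if w: "w \<in> robot_walks n" and M: "MH n h t w \<le> ereal M" for w M
    using A.alg_bound[OF A.LB_walk[OF w M]] unfolding A.W_def a_def by simp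
  have n0: "0 < n" using H by simp
  have O0: "0 \<le> OPT n h t" unfolding OPT_def by (rule INF_greatest) (rule MH_ge0[OF n0])
  show "MH n h t (alg_walk n h t C p0 e) \<le> ereal (100 * log 2 (real n)) * OPT n h t"
  proof (cases "OPT n h t")
    case (real m)
    show ?thesis
    proof (rule ereal_le_epsilon2)
      fix eps :: real assume eps: "0 < eps"
      have "OPT n h t < ereal (m + eps / a)" using real eps a0 by simp
      then obtain w where w: "w \<in> robot_walks n" "MH n h t w < ereal (m + eps / a)"
        unfolding OPT_def by (auto simp: INF_less_iff)
      have "MH n h t (alg_walk n h t C p0 e) \<le> ereal (a * (m + eps / a))"
        using key[OF w(1)] w(2) by (simp add: less_imp_le)
      also have "a * (m + eps / a) = a * m + eps" using a0 by (simp add: field_simps)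
      finally show "MH n h t (alg_walk n h t C p0 e) \<le> ereal (100 * log 2 (real n)) * OPT n h t + ereal eps"
        using real unfolding a_def by simp
    qed
  next
    case PInf
    thus ?thesis using a0 unfolding a_def by simp
  next
    case MInf
    thus ?thesis using O0 by simp
  qed
qed


end
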